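(* Let $T\in\mathcal{T}_{\mathrm{hom}}$ and suppose there exists a $p,q$-invariant open tube $U$ for $T$ with winding number $k$ and jumping number $l$. Then $$\rho_T=\frac{k}{q}\,\omega+\frac{l}{pq}\bmod1.$$ Conversely, the numbers $p,q,k,l$ associated in this way to an invariant open tube are uniquely determined by $\omega$ and $\rho_T$.
   Context: $\mathbb{T}^1=\mathbb{R}/\mathbb{Z}$, $\mathbb{T}^2=\mathbb{T}^1\times\mathbb{T}^1$, $\omega\in[0,1)$ irrational, $\pi$ the natural projections $\mathbb{R}^2\to\mathbb{T}^2$, $\mathbb{T}^1\times\mathbb{R}\to\mathbb{T}^2$. $\mathcal{T}_{\mathrm{hom}}$: continuous maps $T(\theta,x)=(\theta+\omega,T_\theta(x))$ on $\mathbb{T}^2$, homotopic to the identity, with orientation-preserving homeomorphic fibre maps; a lift of $T$ is a continuous $\hat T$ on $\mathbb{R}^2$ (or $\mathbb{T}^1\times\mathbb{R}$) with $\pi\circ\hat T=T\circ\pi$. Fibrewise rotation number: for a lift $\hat T$ to $\mathbb{T}^1\times\mathbb{R}$, $\rho_T:=\lim_{n\to\infty}\frac1n(\hat T^n_\theta(\hat x)-\hat x)\bmod1$ (exists, independent of $\theta,\hat x$ and lift). $q$-curve: point set $\{(\hat\theta\bmod1,\hat\gamma(\hat\theta)\bmod1):\hat\theta\in\mathbb{R}\}$ of a continuous $\hat\gamma:\mathbb{R}\to\mathbb{R}$ with $\hat\gamma(\hat\theta+q)-\hat\gamma(\hat\theta)=k\in\mathbb{Z}$ for all $\hat\theta$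 and $\hat\gamma(\hat\theta+l)-\hat\gamma(\hat\theta)\notin\mathbb{Z}$ for $1\le l<q$; such $\hat\gamma$ are its lifts (determined by their value at $0$), $k$ is its winding number; it meets each fibre in $q$ points $\gamma_1(\theta),\dots,\gamma_q(\theta)$. Invariant open tubes: an open $T$-invariant set $U\subseteq\mathbb{T}^2$ is a $1,q$-invariant open tube if each fibre $U_\theta$ consists of $q$ disjoint nonempty open intervals and $U$ is connected. If $U^1$ is a $1,q$-invariant open tube for $T^p$ and $U^i:=T^{i-1}(U^1)$, $i=1,\dots,p$, are pairwise disjoint, then $U=\bigcup_{i=1}^pU^i$ is a $p,q$-invariant open tube. Each $U^i$ contains a $q$-curve $\gamma^i$ such that each of the $q$ intervals of $U^i_\theta$ contains exactly one of $\gamma^i_1(\theta),\dots,\gamma^i_q(\theta)$; all $\gamma^i$ have the same winding number $k$, the winding number of $U$. Jumping number of $U$: label lifts $\hat x^i_j\in[0,1)$ of $\gamma^i_j(0)$ so that $\hat x^1_1<\hat x^2_1<\dots<\hat x^p_1<\hat x^1_2<\dots<\hat x^p_q$ (possible); let $\hat\gamma^i_j$ be the lift of $\gamma^i$ with $\hat\gamma^i_j(0)=\hat x^i_j$, and $\hat U^i_j$ the connected component of $\pi^{-1}(U^i)\subseteq\mathbb{R}^2$ containing the graph of $\hat\gamma^i_j$. There are unique $0\le m\le p-1$, $0\le n\le q-1$ and a lift $\hat T:\mathbb{R}^2\to\mathbb{R}^2$ of $T$, $\hat T(\hat\theta,\hat x)=(\hat\theta+\omega,\cdot)$, with $\hat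 T(\hat U^1_1)=\hat U^{1+m}_{1+n}$; the jumping number is $l:=m+np$. *)

theory Defs
  imports "HOL-Analysis.Analysis"
begin

text \<open>The circle T^1 = R/Z is realised as the unit circle in the complex plane via
  t \<mapsto> exp(2 pi i t); the torus T^2 as the product of two unit circles.\<close>

definition circ :: "real \<Rightarrow> complex" where
  "circ t = exp (2 * of_real pi * \<i> * of_real t)"

definition S1 :: "complex set" where
  "S1 = sphere 0 1"

definition torus :: "(complex \<times> complex) set" where
  "torus = S1 \<times> S1"

definition pi2 :: "real \<times> real \<Rightarrow> complex \<times> complex" where
  "pi2 v = (circ (fst v), circ (snd v))"

definition tfibre :: "(complex \<times> complex) set \<Rightarrow> complex \<Rightarrow> complex set" where
  "tfibre U z = {w. (z, w) \<in> U}"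

definition circle_op_homeo :: "(complex \<Rightarrow> complex) \<Rightarrow> bool" where
  "circle_op_homeo f \<longleftrightarrow>
     (\<exists>f'. homeomorphism S1 S1 f f') \<and>
     (\<exists>h::real \<Rightarrow> real. continuous_on UNIV h \<and> strict_mono h \<and> (\<forall>x. f (circ x) = circ (h x)))"

definition T_hom :: "real \<Rightarrow> (complex \<times> complex \<Rightarrow> complex \<times> complex) \<Rightarrow> bool" where
  "T_hom \<omega> T \<longleftrightarrow>
     continuous_on torus T \<and> T ` torus \<subseteq> torus \<and>
     (\<forall>\<theta> w. w \<in> S1 \<longrightarrow> fst (T (circ \<theta>, w)) = circ (\<theta> + \<omega>)) \<and>
     homotopic_with_canon (\<lambda>_. True) torus torus T id \<and>
     (\<forall>z\<in>S1. circle_op_homeo (\<lambda>w. snd (T (z, w))))"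

definition is_lift :: "(complex \<times> complex \<Rightarrow> complex \<times> complex) \<Rightarrow> (real \<times> real \<Rightarrow> real \<times> real) \<Rightarrow> bool" where
  "is_lift T F \<longleftrightarrow> continuous_on UNIV F \<and> (\<forall>v. pi2 (F v) = T (pi2 v))"

definition rot_num :: "(complex \<times> complex \<Rightarrow> complex \<times> complex) \<Rightarrow> real" where
  "rot_num T = (THE \<rho>. \<exists>F. is_lift T F \<and>
     (\<exists>r. frac r = \<rho> \<and>
        (\<forall>\<theta> x. (\<lambda>n. (snd ((F ^^ n) (\<theta>, x)) - x) / real n) \<longlonglongrightarrow> r)))"

definition qcurve_lift :: "nat \<Rightarrow> int \<Rightarrow> (complex \<times> complex) set \<Rightarrow> (real \<Rightarrow> real) \<Rightarrow> bool" where
  "qcurve_lift q k C g \<longleftrightarrow>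
     continuous_on UNIV g \<and>
     (\<forall>t. g (t + real q) - g t = of_int k) \<and>
     (\<forall>j\<in>{1..<q}. \<forall>t. g (t + real j) - g t \<notin> \<int>) \<and>
     C = (\<lambda>t. pi2 (t, g t)) ` UNIV"

definition q_arcs :: "nat \<Rightarrow> complex set \<Rightarrow> bool" where
  "q_arcs q A \<longleftrightarrow>
     (\<exists>a b :: nat \<Rightarrow> real.
        (\<forall>i<q. a i < b i \<and> b i \<le> a i + 1) \<and>
        disjoint_family_on (\<lambda>i. circ ` {a i<..<b i}) {..<q} \<and>
        A = (\<Union>i<q. circ ` {a i<..<b i}))"

definition tube1 :: "(complex \<times> complex \<Rightarrow> complex \<times> complex) \<Rightarrow> nat \<Rightarrow> (complex \<times> complex) set \<Rightarrow> bool" where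
  "tube1 S q U \<longleftrightarrow>
     0 < q \<and> U \<subseteq> torus \<and> openin (top_of_set torus) U \<and> S ` U = U \<and> connected U \<and>
     (\<forall>z\<in>S1. q_arcs q (tfibre U z))"

text \<open>p,q-invariant open tube for T with first piece U1; the tube is
  U = (\<Union>i<p. (T^^i) ` U1), the pieces being U^(i+1) = (T^^i) ` U1.\<close>
definition pq_tube :: "(complex \<times> complex \<Rightarrow> complex \<times> complex) \<Rightarrow> nat \<Rightarrow> nat \<Rightarrow> (complex \<times> complex) set \<Rightarrow> bool" where
  "pq_tube T p q U1 \<longleftrightarrow>
     0 < p \<and> tube1 (T ^^ p) q U1 \<and>
     disjoint_family_on (\<lambda>i. (T ^^ i) ` U1) {..<p}"

text \<open>The p,q-invariant open tube with first piece U1 has winding number k and jumping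
  number l (indices 0-based: piece i is (T^^i) ` U1, lift h i j corresponds to
  the paper's hat-gamma^(i+1)_(j+1)).\<close>
definition tube_wind_jump ::
  "real \<Rightarrow> (complex \<times> complex \<Rightarrow> complex \<times> complex) \<Rightarrow> nat \<Rightarrow> nat \<Rightarrow> int \<Rightarrow> nat \<Rightarrow> (complex \<times> complex) set \<Rightarrow> bool" where
  "tube_wind_jump \<omega> T p q k l U1 \<longleftrightarrow>
     pq_tube T p q U1 \<and>
     (\<exists>(C :: nat \<Rightarrow> (complex \<times> complex) set) (h :: nat \<Rightarrow> nat \<Rightarrow> real \<Rightarrow> real) m n F.
        (\<forall>i<p. C i \<subseteq> (T ^^ i) ` U1 \<and>
           (\<forall>z\<in>S1. \<forall>c\<in>components (tfibre ((T ^^ i) ` U1) z). card (c \<inter> tfibre (C i) z) = 1) \<and>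
           (\<forall>j<q. qcurve_lift q k (C i) (h i j) \<and> 0 \<le> h i j 0 \<and> h i j 0 < 1)) \<and>
        (\<forall>i j i' j'. i < p \<longrightarrow> j < q \<longrightarrow> i' < p \<longrightarrow> j' < q \<longrightarrow>
           i + j * p < i' + j' * p \<longrightarrow> h i j 0 < h i' j' 0) \<and>
        m < p \<and> n < q \<and>
        is_lift T F \<and> (\<forall>\<theta> x. fst (F (\<theta>, x)) = \<theta> + \<omega>) \<and>
        F ` connected_component_set (pi2 -` U1) (0, h 0 0 0)
          = connected_component_set (pi2 -` ((T ^^ m) ` U1)) (0, h m n 0) \<and>
        l = m + n * p)"

end

theory Submission
  imports Defs
begin

lemma circ_diff: "circ a / circ b = circ (a - b)"
  unfolding circ_def by (simp add: exp_diff[symmetric] algebra_simps)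

lemma circ_eq_1: "circ x = 1 \<longleftrightarrow> x \<in> \<int>"
proof -
  have "circ x = 1 \<longleftrightarrow> (\<exists>n::int. 2 * pi * x = of_int (2 * n) * pi)"
    unfolding circ_def exp_eq_1 by simp
  also have "\<dots> \<longleftrightarrow> (\<exists>n::int. x = of_int n)" by auto
  also have "\<dots> \<longleftrightarrow> x \<in> \<int>" by (auto elim: Ints_cases)
  finally show ?thesis .
qed

lemma circ_nz: "circ x \<noteq> 0" unfolding circ_def by simp

lemma circ_eq_iff: "circ a = circ b \<longleftrightarrow> a - b \<in> \<int>"
proof -
  have "circ a = circ b \<longleftrightarrow> circ a / circ b = 1" using circ_nz[of b] by auto
  then show ?thesis by (simp add: circ_diff circ_eq_1)
qed

lemma circ_int_shift: "c \<in> \<int> \<Longrightarrow> circ (a + c) = circ a"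
  by (simp add: circ_eq_iff)

lemma circ_S1 [simp]: "circ t \<in> S1"
  unfolding circ_def S1_def by (simp add: norm_exp_eq_Re)

lemma S1_circ: assumes "z \<in> S1" obtains t where "z = circ t"
proof -
  have nz: "norm z = 1" using assms by (simp add: S1_def)
  have "z = of_real (norm z) * exp(\<i> * of_real(Arg2pi z))" by (rule Arg2pi_eq)
  then have "z = circ (Arg2pi z / (2*pi))" using nz unfolding circ_def by (simp add: algebra_simps)
  then show ?thesis using that by blast
qed

lemma continuous_circ [continuous_intros]: "continuous_on A circ"
  unfolding circ_def by (intro continuous_intros)

lemma continuous_circ_comp [continuous_intros]: "continuous_on A f \<Longrightarrow> continuous_on A (\<lambda>x. circ (f x))"
  using continuous_on_compose2[OF continuous_circ[of UNIV] _ subset_UNIV] by blast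

lemma continuous_pi2 [continuous_intros]: "continuous_on A pi2"
  unfolding pi2_def by (intro continuous_intros continuous_on_fst continuous_on_snd continuous_on_id)

lemma pi2_torus [simp]: "pi2 v \<in> torus"
  by (simp add: pi2_def torus_def)

lemma pi2_eq_iff: "pi2 (a, b) = pi2 (c, d) \<longleftrightarrow> a - c \<in> \<int> \<and> b - d \<in> \<int>"
  by (simp add: pi2_def circ_eq_iff)

lemma pi2_shift: "c \<in> \<int> \<Longrightarrow> d \<in> \<int> \<Longrightarrow> pi2 (a + c, b + d) = pi2 (a, b)"
  by (simp add: pi2_eq_iff)

lemma torus_pi2: assumes "v \<in> torus" obtains a b where "v = pi2 (a, b)"
proof -
  obtain z w where v: "v = (z, w)" "z \<in> S1" "w \<in> S1" using assms by (auto simp: torus_def)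
  obtain a where "z = circ a" using S1_circ v by blast
  moreover obtain b where "w = circ b" using S1_circ v by blast
  ultimately show ?thesis using that v by (auto simp: pi2_def)
qed

lemma Ints_valued_const:
  fixes f :: "'a::topological_space \<Rightarrow> real"
  assumes "connected S" "continuous_on S f" "\<And>x. x \<in> S \<Longrightarrow> f x \<in> \<int>"
  shows "f constant_on S"
proof (rule continuous_discrete_range_constant[OF assms(1,2)])
  fix x assume "x \<in> S"
  show "\<exists>e>0. \<forall>y. y \<in> S \<and> f y \<noteq> f x \<longrightarrow> e \<le> norm (f y - f x)"
  proof (intro exI[of _ 1] conjI allI impI)
    fix y assume "y \<in> S \<and> f y \<noteq> f x"
    then have "f y - f x \<in> \<int>" "f y - f x \<noteq> 0" using assms(3) \<open>x \<in> S\<close> by auto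
    then show "1 \<le> norm (f y - f x)"
      by (metis Ints_cases Ints_nonzero_abs_ge1 real_norm_def)
  qed simp
qed

lemma Ints_valued_const_UNIV:
  fixes f :: "'a::{real_normed_vector} \<Rightarrow> real"
  assumes "continuous_on UNIV f" "\<And>x. f x \<in> \<int>"
  shows "f x = f y"
proof -
  obtain c where "\<forall>x. f x = c" using Ints_valued_const[of UNIV f] assms connected_UNIV
    unfolding constant_on_def by blast
  then show ?thesis by simp
qed


lemma T_hom_fst: assumes "T_hom \<omega> T" "w \<in> S1" shows "fst (T (circ \<theta>, w)) = circ (\<theta> + \<omega>)"
  using assms unfolding T_hom_def by blast

lemma T_hom_fib: assumes "T_hom \<omega> T" "z \<in> S1" shows "circle_op_homeo (\<lambda>w. snd (T (z, w)))"
  using assms unfolding T_hom_def by blast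

lemma T_hom_fib_homeo: assumes "T_hom \<omega> T" "z \<in> S1"
  obtains g where "homeomorphism S1 S1 (\<lambda>w. snd (T (z, w))) g"
  using T_hom_fib[OF assms] unfolding circle_op_homeo_def by blast

lemma T_hom_torus: assumes "T_hom \<omega> T" "v \<in> torus" shows "T v \<in> torus"
  using assms unfolding T_hom_def by blast

lemma T_hom_cont: assumes "T_hom \<omega> T" shows "continuous_on torus T"
  using assms unfolding T_hom_def by blast

lemma T_hom_eq: assumes "T_hom \<omega> T" "w \<in> S1"
  shows "T (circ \<theta>, w) = (circ (\<theta> + \<omega>), snd (T (circ \<theta>, w)))"
  using T_hom_fst[OF assms] by (metis prod.collapse)

lemma T_hom_inj: assumes "T_hom \<omega> T" shows "inj_on T torus"
proof
  fix v v' assume v: "v \<in> torus" and v': "v' \<in> torus" and eq: "T v = T v'"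
  obtain z w where zw: "v = (z, w)" "z \<in> S1" "w \<in> S1" using v by (auto simp: torus_def)
  obtain z' w' where zw': "v' = (z', w')" "z' \<in> S1" "w' \<in> S1" using v' by (auto simp: torus_def)
  obtain a where a: "z = circ a" using S1_circ zw by blast
  obtain a' where a': "z' = circ a'" using S1_circ zw' by blast
  have "circ (a + \<omega>) = circ (a' + \<omega>)"
    using eq T_hom_fst[OF assms zw(3), of a] T_hom_fst[OF assms zw'(3), of a'] zw zw' a a' by simp
  then have zz: "z = z'" using a a' by (simp add: circ_eq_iff)
  obtain g where "homeomorphism S1 S1 (\<lambda>u. snd (T (z, u))) g"
    using T_hom_fib_homeo[OF assms zw(2)] by blast
  then have "inj_on (\<lambda>u. snd (T (z, u))) S1" by (meson homeomorphism_apply1 inj_on_inverseI)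
  moreover have "snd (T (z, w)) = snd (T (z, w'))" using eq zw zw' \<open>z = z'\<close> by simp
  ultimately have "w = w'" using zw zw' by (meson inj_onD)
  then show "v = v'" using zw zw' zz by simp
qed

lemma T_hom_full: assumes "T_hom \<omega> T" "z \<in> S1" "\<forall>w\<in>S1. (z, w) \<in> W"
  shows "\<exists>z'\<in>S1. \<forall>w'\<in>S1. (z', w') \<in> T ` W"
proof -
  obtain a where a: "z = circ a" using S1_circ assms(2) by blast
  obtain g where g: "homeomorphism S1 S1 (\<lambda>u. snd (T (z, u))) g"
    using T_hom_fib_homeo[OF assms(1,2)] by blast
  show ?thesis
  proof (intro bexI[of _ "circ (a + \<omega>)"] ballI)
    fix w' assume w': "w' \<in> S1"
    then have gw: "g w' \<in> S1" "snd (T (z, g w')) = w'" using g by (auto simp: homeomorphism_def)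
    have "T (z, g w') = (circ (a + \<omega>), w')" using T_hom_eq[OF assms(1) gw(1), of a] gw a by simp
    moreover have "(z, g w') \<in> W" using assms(3) gw(1) by blast
    ultimately show "(circ (a + \<omega>), w') \<in> T ` W" by (metis image_eqI)
  qed simp
qed

lemma T_hom_surj: assumes "T_hom \<omega> T" shows "T ` torus = torus"
proof
  show "T ` torus \<subseteq> torus" using assms unfolding T_hom_def by blast
  show "torus \<subseteq> T ` torus"
  proof
    fix v assume "v \<in> torus"
    then obtain z' w' where v: "v = (z', w')" "z' \<in> S1" "w' \<in> S1" by (auto simp: torus_def)
    obtain a where a: "z' = circ a" using S1_circ v by blast
    define z where "z = circ (a - \<omega>)"
    have z: "z \<in> S1" by (simp add: z_def)
    obtain g where g: "homeomorphism S1 S1 (\<lambda>u. snd (T (z, u))) g"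
      using T_hom_fib_homeo[OF assms z] by blast
    then have gw: "g w' \<in> S1" "snd (T (z, g w')) = w'" using v by (auto simp: homeomorphism_def)
    have "T (z, g w') = (circ (a - \<omega> + \<omega>), w')" using T_hom_eq[OF assms gw(1), of "a - \<omega>"] gw z_def by simp
    then have e: "v = T (z, g w')" using v a by simp
    have m: "(z, g w') \<in> torus" using z gw by (simp add: torus_def)
    show "v \<in> T ` torus" using e m by blast
  qed
qed

lemma compact_torus: "compact torus"
  unfolding torus_def S1_def by (intro compact_Times compact_sphere)

lemma T_hom_open: assumes "T_hom \<omega> T" "openin (top_of_set torus) W"
  shows "openin (top_of_set torus) (T ` W)"
proof -
  obtain g where "homeomorphism torus torus T g"
    using homeomorphism_compact[OF compact_torus T_hom_cont[OF assms(1)] T_hom_surj[OF assms(1)] T_hom_inj[OF assms(1)]]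
    by blast
  then show ?thesis using homeomorphism_imp_open_map assms(2) by blast
qed

lemma T_hom_pow_open: assumes "T_hom \<omega> T" "openin (top_of_set torus) W"
  shows "openin (top_of_set torus) ((T ^^ i) ` W)"
proof (induction i)
  case 0 then show ?case using assms(2) by simp
next
  case (Suc i)
  have "(T ^^ Suc i) ` W = T ` ((T ^^ i) ` W)" by (simp add: image_comp)
  then show ?case using T_hom_open[OF assms(1) Suc] by simp
qed

lemma T_hom_pow_sub: assumes "T_hom \<omega> T" "W \<subseteq> torus"
  shows "(T ^^ i) ` W \<subseteq> torus"
proof (induction i)
  case 0 then show ?case using assms(2) by simp
next
  case (Suc i)
  have "(T ^^ Suc i) ` W = T ` ((T ^^ i) ` W)" by (simp add: image_comp)
  moreover have "T ` ((T ^^ i) ` W) \<subseteq> torus" using Suc T_hom_torus[OF assms(1)] by blast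
  ultimately show ?case by simp
qed

lemma T_hom_pow_full: assumes "T_hom \<omega> T" "z \<in> S1" "\<forall>w\<in>S1. (z, w) \<in> W"
  shows "\<exists>z'\<in>S1. \<forall>w'\<in>S1. (z', w') \<in> (T ^^ i) ` W"
proof (induction i)
  case 0 then show ?case using assms by auto
next
  case (Suc i)
  then obtain z' where "z' \<in> S1" "\<forall>w'\<in>S1. (z', w') \<in> (T ^^ i) ` W" by blast
  have "(T ^^ Suc i) ` W = T ` ((T ^^ i) ` W)" by (simp add: image_comp)
  with T_hom_full[OF assms(1) \<open>z' \<in> S1\<close> \<open>\<forall>w'\<in>S1. (z', w') \<in> (T ^^ i) ` W\<close>] show ?case by simp
qed


lemma is_lift_pi2: "is_lift T F \<Longrightarrow> pi2 (F v) = T (pi2 v)"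
  unfolding is_lift_def by blast

lemma is_lift_cont: "is_lift T F \<Longrightarrow> continuous_on UNIV F"
  unfolding is_lift_def by blast

lemma lift_snd_cont: assumes "is_lift T F" shows "continuous_on UNIV (\<lambda>x. snd (F (\<theta>, x)))"
proof -
  have "continuous_on UNIV (\<lambda>x. (\<theta>::real, x::real))" by (intro continuous_intros)
  then have "continuous_on UNIV (\<lambda>x. F (\<theta>, x))"
    using continuous_on_compose2[OF is_lift_cont[OF assms]] by blast
  then show ?thesis by (intro continuous_intros)
qed

lemma lift_fst_cont: assumes "is_lift T F" shows "continuous_on UNIV (\<lambda>v. fst (F v))"
  using is_lift_cont[OF assms] by (intro continuous_intros)

lemma lift_snd_cont2: assumes "is_lift T F" shows "continuous_on UNIV (\<lambda>v. snd (F v))"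
  using is_lift_cont[OF assms] by (intro continuous_intros)

lemma lift_snd_circ: assumes "is_lift T F"
  shows "circ (snd (F (\<theta>, x))) = snd (T (circ \<theta>, circ x))"
  using is_lift_pi2[OF assms, of "(\<theta>, x)"] by (simp add: pi2_def prod_eq_iff)

lemma lift_fibre_props:
  assumes T: "T_hom \<omega> T" and F: "is_lift T F"
  shows "strict_mono (\<lambda>x. snd (F (\<theta>, x))) \<and> (\<forall>x. snd (F (\<theta>, x + 1)) = snd (F (\<theta>, x)) + 1)"
proof -
  define f where "f = (\<lambda>w. snd (T (circ \<theta>, w)))"
  have "circle_op_homeo f" unfolding f_def by (rule T_hom_fib[OF T circ_S1])
  then obtain g h where g: "homeomorphism S1 S1 f g" and hc: "continuous_on UNIV h"
    and hm: "strict_mono h" and hf: "\<And>x. f (circ x) = circ (h x)"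
    unfolding circle_op_homeo_def by blast
  have finj: "inj_on f S1" using g by (meson homeomorphism_apply1 inj_on_inverseI)
  define \<psi> where "\<psi> = (\<lambda>x. snd (F (\<theta>, x)))"
  have \<psi>c: "continuous_on UNIV \<psi>" unfolding \<psi>_def by (rule lift_snd_cont[OF F])
  have "circ (\<psi> x) = circ (h x)" for x unfolding \<psi>_def using lift_snd_circ[OF F] hf f_def by simp
  then have "\<psi> x - h x \<in> \<int>" for x by (simp add: circ_eq_iff)
  then have c0: "\<psi> x - h x = \<psi> 0 - h 0" for x
    using Ints_valued_const_UNIV[of "\<lambda>x. \<psi> x - h x"] \<psi>c hc by (auto intro: continuous_intros)
  have "circ (h (x + 1)) = circ (h x)" for x
    using hf[of "x+1"] hf[of x] circ_int_shift[of 1 x] by simp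
  then have "h (x + 1) - h x \<in> \<int>" for x by (simp add: circ_eq_iff)
  moreover have "continuous_on UNIV (\<lambda>x. h (x + 1) - h x)"
    using hc by (intro continuous_intros continuous_on_compose2[OF hc]) auto
  ultimately have dconst: "h (x + 1) - h x = h 1 - h 0" for x
    using Ints_valued_const_UNIV[of "\<lambda>x. h (x + 1) - h x" x 0] by simp
  have d1: "h 1 - h 0 = 1"
  proof (rule ccontr)
    assume ne: "h 1 - h 0 \<noteq> 1"
    have "h 1 - h 0 \<in> \<int>" using \<open>\<And>x. h (x + 1) - h x \<in> \<int>\<close>[of 0] by simp
    moreover have "h 0 < h 1" using hm by (simp add: strict_mono_def)
    ultimately have "h 1 - h 0 \<ge> 2"
    proof -
      obtain n :: int where n: "h 1 - h 0 = of_int n" using \<open>h 1 - h 0 \<in> \<int>\<close> by (auto elim: Ints_cases)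
      then have "n > 0" "n \<noteq> 1" using \<open>h 0 < h 1\<close> ne by auto
      then have "n \<ge> 2" by linarith
      then show ?thesis using n by simp
    qed
    then obtain y where y: "0 \<le> y" "y \<le> 1" "h y = h 0 + 1"
      using IVT'[of h 0 "h 0 + 1" 1] continuous_on_subset[OF hc] by force
    have "y \<noteq> 0" using y by auto
    moreover have "y \<noteq> 1" using y \<open>h 1 - h 0 \<ge> 2\<close> by auto
    ultimately have y01: "0 < y" "y < 1" using y by auto
    have "f (circ y) = f (circ 0)" using hf y circ_int_shift[of 1 "h 0"] by simp
    then have "circ y = circ 0" using finj circ_S1 by (meson inj_onD)
    then have "y \<in> \<int>" by (simp add: circ_eq_iff)
    then obtain n :: int where "y = of_int n" by (auto elim: Ints_cases)
    then show False using y01 by auto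
  qed
  have "strict_mono \<psi>"
    unfolding strict_mono_def
  proof (intro allI impI)
    fix x y :: real assume "x < y"
    then have "h x < h y" using hm by (simp add: strict_mono_def)
    then show "\<psi> x < \<psi> y" using c0[of x] c0[of y] by simp
  qed
  moreover have "\<psi> (x + 1) = \<psi> x + 1" for x
    using c0[of x] c0[of "x+1"] dconst[of x] d1 by simp
  ultimately show ?thesis unfolding \<psi>_def by blast
qed

lemma lift_fibre_mono: assumes "T_hom \<omega> T" "is_lift T F" "x < y"
  shows "snd (F (\<theta>, x)) < snd (F (\<theta>, y))"
  using lift_fibre_props[OF assms(1,2), of \<theta>] assms(3) by (simp add: strict_mono_def)

lemma lift_fibre_le: assumes "T_hom \<omega> T" "is_lift T F" "x \<le> y"
  shows "snd (F (\<theta>, x)) \<le> snd (F (\<theta>, y))"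
  using lift_fibre_mono[OF assms(1,2)] assms(3) by (cases "x = y") (auto simp: less_imp_le)

lemma lift_fibre_nat: assumes "T_hom \<omega> T" "is_lift T F"
  shows "snd (F (\<theta>, x + real n)) = snd (F (\<theta>, x)) + real n"
proof (induction n)
  case 0 then show ?case by simp
next
  case (Suc n)
  have "snd (F (\<theta>, x + real (Suc n))) = snd (F (\<theta>, (x + real n) + 1))" by (simp add: algebra_simps)
  also have "\<dots> = snd (F (\<theta>, x + real n)) + 1" using lift_fibre_props[OF assms] by blast
  finally show ?case using Suc by simp
qed

lemma lift_fibre_int: assumes "T_hom \<omega> T" "is_lift T F" "c \<in> \<int>"
  shows "snd (F (\<theta>, x + c)) = snd (F (\<theta>, x)) + c"
proof -
  obtain n :: int where n: "c = of_int n" using assms(3) by (auto elim: Ints_cases)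
  show ?thesis
  proof (cases "n \<ge> 0")
    case True
    then have "c = real (nat n)" using n by simp
    then show ?thesis using lift_fibre_nat[OF assms(1,2)] by simp
  next
    case False
    then have c: "c = - real (nat (-n))" using n by simp
    have "snd (F (\<theta>, x)) = snd (F (\<theta>, (x + c) + real (nat (-n))))" using c by simp
    also have "\<dots> = snd (F (\<theta>, x + c)) + real (nat (-n))" using lift_fibre_nat[OF assms(1,2)] by blast
    finally show ?thesis using c by simp
  qed
qed


lemma Ints_diff_cancel: "x - y \<in> \<int> \<Longrightarrow> x - z \<in> \<int> \<Longrightarrow> (z::real) - y \<in> \<int>"
proof -
  assume "x - y \<in> \<int>" "x - z \<in> \<int>"
  then have "(x - y) - (x - z) \<in> \<int>" by (rule Ints_diff)
  moreover have "(x - y) - (x - z) = z - y" by simp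
  ultimately show ?thesis by simp
qed

lemma connected_open_sub:
  assumes "connected S" "open A" "open B" "A \<inter> B \<inter> S = {}" "S \<subseteq> A \<union> B" "x \<in> S" "x \<in> A"
  shows "S \<subseteq> A"
proof -
  have "A \<inter> S = {} \<or> B \<inter> S = {}" by (rule connectedD[OF assms(1-5)])
  then show ?thesis using assms(5-7) by blast
qed

lemma ql_cont: "qcurve_lift q k C g \<Longrightarrow> continuous_on UNIV g"
  unfolding qcurve_lift_def by blast
lemma ql_per: "qcurve_lift q k C g \<Longrightarrow> g (t + real q) = g t + of_int k"
  unfolding qcurve_lift_def by (metis add_diff_cancel_left' diff_add_cancel add.commute)
lemma ql_nonint: "qcurve_lift q k C g \<Longrightarrow> j \<in> {1..<q} \<Longrightarrow> g (t + real j) - g t \<notin> \<int>"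
  unfolding qcurve_lift_def by blast
lemma ql_img: "qcurve_lift q k C g \<Longrightarrow> C = (\<lambda>t. pi2 (t, g t)) ` UNIV"
  unfolding qcurve_lift_def by blast

lemma ql_per_nat: assumes "qcurve_lift q k C g"
  shows "g (t + real (q * n)) = g t + of_int (int n * k)"
proof (induction n)
  case 0 then show ?case by simp
next
  case (Suc n)
  have "g (t + real (q * Suc n)) = g ((t + real (q * n)) + real q)" by (simp add: algebra_simps)
  also have "\<dots> = g (t + real (q * n)) + of_int k" by (rule ql_per[OF assms])
  finally show ?case using Suc by (simp add: algebra_simps)
qed

lemma ql_per_int: assumes "qcurve_lift q k C g"
  shows "g (t + of_int (int q * b)) = g t + of_int (b * k)"
proof (cases "b \<ge> 0")
  case True
  then have "of_int (int q * b) = real (q * nat b)" by simp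
  then show ?thesis using ql_per_nat[OF assms, of t "nat b"] True by simp
next
  case False
  have "g t = g ((t + of_int (int q * b)) + real (q * nat (-b)))" using False by simp
  also have "\<dots> = g (t + of_int (int q * b)) + of_int (int (nat (-b)) * k)" by (rule ql_per_nat[OF assms])
  finally show ?thesis using False by (simp add: algebra_simps)
qed

lemma ql_shift_val: assumes "qcurve_lift q k C g" "c \<in> \<int>"
  shows "qcurve_lift q k C (\<lambda>t. g t + c)"
proof -
  have "(\<lambda>t. pi2 (t, g t + c)) = (\<lambda>t. pi2 (t, g t))"
    using pi2_shift[of 0 c] assms(2) by (auto simp: fun_eq_iff)
  then have img: "(\<lambda>t. pi2 (t, g t + c)) ` UNIV = C" by (simp only: ql_img[OF assms(1)])
  have cont: "continuous_on UNIV (\<lambda>t. g t + c)" using ql_cont[OF assms(1)] by (intro continuous_intros)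
  show ?thesis unfolding qcurve_lift_def
  proof (intro conjI cont img[symmetric] allI ballI)
    fix t show "g (t + real q) + c - (g t + c) = of_int k" using ql_per[OF assms(1)] by simp
  next
    fix j t assume "j \<in> {1..<q}"
    then show "g (t + real j) + c - (g t + c) \<notin> \<int>" using ql_nonint[OF assms(1)] by simp
  qed
qed

lemma ql_shift_arg: assumes "qcurve_lift q k C g" "a \<in> \<int>"
  shows "qcurve_lift q k C (\<lambda>t. g (t + a))"
proof -
  have cont: "continuous_on UNIV (\<lambda>t. g (t + a))"
    by (rule continuous_on_compose2[OF ql_cont[OF assms(1)]]) (auto intro: continuous_intros)
  have "(\<lambda>t. pi2 (t, g (t + a))) ` UNIV = (\<lambda>t. pi2 (t, g t)) ` UNIV"
  proof (intro equalityI subsetI)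
    fix v assume "v \<in> (\<lambda>t. pi2 (t, g (t + a))) ` UNIV"
    then obtain t where "v = pi2 (t, g (t + a))" by blast
    then have "v = pi2 (t + a, g (t + a))" using pi2_shift[of a 0 t] assms(2) by simp
    then show "v \<in> (\<lambda>t. pi2 (t, g t)) ` UNIV" by blast
  next
    fix v assume "v \<in> (\<lambda>t. pi2 (t, g t)) ` UNIV"
    then obtain t where "v = pi2 (t, g t)" by blast
    then have "v = pi2 ((t - a) + a, g ((t - a) + a))" by simp
    also have "\<dots> = pi2 (t - a, g ((t - a) + a))" using pi2_shift[of a 0 "t - a"] assms(2) by simp
    finally show "v \<in> (\<lambda>t. pi2 (t, g (t + a))) ` UNIV" by blast
  qed
  then have img: "C = (\<lambda>t. pi2 (t, g (t + a))) ` UNIV" using ql_img[OF assms(1)] by simp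
  show ?thesis unfolding qcurve_lift_def
  proof (intro conjI cont img allI ballI)
    fix t show "g (t + real q + a) - g (t + a) = of_int k"
      using ql_per[OF assms(1), of "t + a"] by (simp add: algebra_simps)
  next
    fix j t assume "j \<in> {1..<q}"
    then show "g (t + real j + a) - g (t + a) \<notin> \<int>"
      using ql_nonint[OF assms(1), of j "t + a"] by (simp add: algebra_simps)
  qed
qed

lemma ql_point: assumes "qcurve_lift q k C g" "qcurve_lift q k' C g'" "0 < q"
  shows "\<exists>a<q. g' t - g (t + real a) \<in> \<int>"
proof -
  have "pi2 (t, g' t) \<in> C" using ql_img[OF assms(2)] by blast
  then obtain s where "pi2 (t, g' t) = pi2 (s, g s)" using ql_img[OF assms(1)] by blast
  then have st: "t - s \<in> \<int>" "g' t - g s \<in> \<int>" by (auto simp: pi2_eq_iff)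
  obtain n :: int where "t - s = of_int n" using st(1) by (auto elim: Ints_cases)
  then have z: "s = t + of_int (- n)" by simp
  define z where "z = - n"
  note z = z[folded z_def]
  define a where "a = nat (z mod int q)"
  have a: "a < q" "int a = z mod int q" using assms(3) by (auto simp: a_def) (simp add: nat_less_iff)
  have "z = int q * (z div int q) + int a" using a by simp
  then have "of_int z = real a + of_int (int q * (z div int q))"
    by (metis add.commute of_int_add of_int_of_nat_eq)
  then have "s = (t + real a) + of_int (int q * (z div int q))" using z by simp
  then have "g s = g (t + real a) + of_int ((z div int q) * k)" using ql_per_int[OF assms(1)] by simp
  then have e: "g' t - g (t + real a) = (g' t - g s) + of_int ((z div int q) * k)" by simp
  have "g' t - g (t + real a) \<in> \<int>" unfolding e using st(2) by (intro Ints_add Ints_of_int)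
  then show ?thesis using a by blast
qed

lemma ql_distinct_shift: assumes "qcurve_lift q k C g" "a < q" "b < q" "a \<noteq> b"
  shows "g (t + real a) - g (t + real b) \<notin> \<int>"
proof
  assume H: "g (t + real a) - g (t + real b) \<in> \<int>"
  show False
  proof (cases "a < b")
    case True
    have "b - a \<in> {1..<q}" using True assms(3) by auto
    then have "g ((t + real a) + real (b - a)) - g (t + real a) \<notin> \<int>"
      by (rule ql_nonint[OF assms(1)])
    moreover have "(t + real a) + real (b - a) = t + real b" using True by simp
    ultimately show False using H by (metis Ints_minus minus_diff_eq)
  next
    case False
    then have ba: "b < a" using assms(4) by simp
    have "a - b \<in> {1..<q}" using ba assms(2) by auto
    then have "g ((t + real b) + real (a - b)) - g (t + real b) \<notin> \<int>"
      by (rule ql_nonint[OF assms(1)])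
    moreover have "(t + real b) + real (a - b) = t + real a" using ba by simp
    ultimately show False using H by simp
  qed
qed

lemma ql_unique: assumes "qcurve_lift q k C g" "qcurve_lift q k' C g'" "0 < q"
  shows "\<exists>a<q. \<exists>c\<in>\<int>. \<forall>t. g' t = g (t + real a) + c"
proof -
  obtain a where a: "a < q" "g' 0 - g (0 + real a) \<in> \<int>" using ql_point[OF assms] by blast
  define Z where "Z = (\<lambda>b. {t. g' t - g (t + real b) \<in> \<int>})"
  have contb: "continuous_on UNIV (\<lambda>t. g' t - g (t + real b))" for b
    using ql_cont[OF assms(1)] ql_cont[OF assms(2)]
    by (intro continuous_intros continuous_on_compose2[OF ql_cont[OF assms(1)]]) auto
  have clZ: "closed (Z b)" for b
  proof -
    have "Z b = (\<lambda>t. g' t - g (t + real b)) -` \<int>" by (auto simp: Z_def)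
    then show ?thesis using continuous_closed_vimage[of \<int> "\<lambda>t. g' t - g (t + real b)"] contb[of b]
      closed_Ints by (simp add: continuous_on_eq_continuous_within)
  qed
  have cover: "\<exists>b<q. t \<in> Z b" for t using ql_point[OF assms] by (auto simp: Z_def)
  have disj: "t \<in> Z b \<Longrightarrow> t \<in> Z b' \<Longrightarrow> b < q \<Longrightarrow> b' < q \<Longrightarrow> b = b'" for t b b'
  proof (rule ccontr)
    assume "t \<in> Z b" "t \<in> Z b'" "b < q" "b' < q" "b \<noteq> b'"
    then have "g (t + real b) - g (t + real b') \<in> \<int>" by (auto simp: Z_def intro: Ints_diff_cancel)
    then show False using ql_distinct_shift[OF assms(1)] \<open>b < q\<close> \<open>b' < q\<close> \<open>b \<noteq> b'\<close> by blast
  qed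
  have compl: "- Z a = (\<Union>b\<in>{b. b < q \<and> b \<noteq> a}. Z b)"
    using cover disj a(1) by blast
  have "closed (- Z a)" unfolding compl by (intro closed_UN) (auto intro: clZ)
  then have "open (Z a)" by (simp add: open_closed)
  moreover have "0 \<in> Z a" using a by (simp add: Z_def)
  ultimately have "UNIV \<subseteq> Z a"
    using connected_open_sub[OF connected_UNIV \<open>open (Z a)\<close> open_Compl[OF clZ[of a]], of 0] by blast
  then have "Z a = UNIV" by blast
  then have "\<And>t. g' t - g (t + real a) \<in> \<int>" by (auto simp: Z_def)
  then have "\<And>t. g' t - g (t + real a) = g' 0 - g (0 + real a)"
    using Ints_valued_const_UNIV[OF contb] by blast
  then show ?thesis using a by (intro exI[of _ a] conjI bexI[of _ "g' 0 - g (0 + real a)"]) (auto simp: algebra_simps)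
qed

lemma ql_eq: assumes "qcurve_lift q k C g" "qcurve_lift q k' C g'" "0 < q" "g t0 = g' t0"
  shows "g' = g"
proof -
  obtain a c where a: "a < q" "c \<in> \<int>" "\<And>t. g' t = g (t + real a) + c" using ql_unique[OF assms(1-3)] by blast
  have "a = 0"
  proof (rule ccontr)
    assume "a \<noteq> 0"
    have e: "g (t0 + real a) - g (t0 + real 0) = - c" using a(3)[of t0] assms(4) by simp
    have "g (t0 + real a) - g (t0 + real 0) \<in> \<int>" unfolding e using a(2) by (rule Ints_minus)
    then show False using ql_distinct_shift[OF assms(1) a(1), of 0] \<open>a \<noteq> 0\<close> assms(3) by blast
  qed
  then have "\<And>t. g' t = g t + c" using a by simp
  moreover then have "c = 0" using assms(4) by (metis add_cancel_left_right)
  ultimately show ?thesis by auto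
qed


lemma Ints_diff_sym: "((a::real) - b \<in> \<int>) = (b - a \<in> \<int>)"
  by (metis Ints_minus minus_diff_eq)

lemma connected_S1: "connected S1"
  unfolding S1_def by (rule connected_sphere) simp

lemma circ_reduce: obtains t' where "circ t' = circ t" "a \<le> t'" "t' < a + 1"
proof -
  define t' where "t' = t - of_int \<lfloor>t - a\<rfloor>"
  have "circ t' = circ t" unfolding t'_def by (simp add: circ_eq_iff)
  moreover have "a \<le> t'" "t' < a + 1" unfolding t'_def by linarith+
  ultimately show ?thesis using that by blast
qed

lemma S1_reduce: assumes "z \<in> S1" obtains t where "z = circ t" "a \<le> t" "t < a + 1"
proof -
  obtain t0 where "z = circ t0" using S1_circ assms by blast
  then show ?thesis using circ_reduce[of t0 a] that by metis
qed

lemma Ints_01: assumes "(x::real) \<in> \<int>" "0 < x" "x < 1" shows False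
proof -
  obtain n :: int where "x = of_int n" using assms(1) by (auto elim: Ints_cases)
  then show False using assms by auto
qed

lemma closed_circ_image: "closed (circ ` {a..b})"
  by (intro compact_imp_closed compact_continuous_image continuous_circ compact_Icc)

lemma arc_eq: assumes "a < b" "b \<le> a + 1"
  shows "circ ` {a<..<b} = S1 - circ ` {b..a+1}"
proof (intro equalityI subsetI)
  fix z assume "z \<in> circ ` {a<..<b}"
  then obtain s where s: "z = circ s" "a < s" "s < b" by auto
  have "z \<notin> circ ` {b..a+1}"
  proof
    assume "z \<in> circ ` {b..a+1}"
    then obtain t where t: "z = circ t" "b \<le> t" "t \<le> a + 1" by auto
    then have "t - s \<in> \<int>" using s by (simp add: circ_eq_iff Ints_diff_sym)
    then show False using Ints_01[of "t - s"] s t by linarith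
  qed
  then show "z \<in> S1 - circ ` {b..a+1}" using s by simp
next
  fix z assume z: "z \<in> S1 - circ ` {b..a+1}"
  then obtain t where t: "z = circ t" "a \<le> t" "t < a + 1" using S1_reduce[of z a] by blast
  have "t \<noteq> a"
  proof
    assume "t = a"
    then have "z = circ (a + 1)" using t by (simp add: circ_eq_iff)
    then show False using z assms by auto
  qed
  moreover have "\<not> b \<le> t" using z t by auto
  ultimately show "z \<in> circ ` {a<..<b}" using t by auto
qed

lemma q_arcs_not_full: assumes "q_arcs q A" "0 < q" shows "A \<noteq> S1"
proof
  assume AS: "A = S1"
  obtain a b :: "nat \<Rightarrow> real" where ab: "\<forall>i<q. a i < b i \<and> b i \<le> a i + 1"
    and dj: "disjoint_family_on (\<lambda>i. circ ` {a i<..<b i}) {..<q}"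
    and Aeq: "A = (\<Union>i<q. circ ` {a i<..<b i})"
    using assms(1) unfolding q_arcs_def by blast
  define Oa where "Oa = (\<lambda>i. - circ ` {b i..a i + 1})"
  have Oo: "open (Oa i)" for i unfolding Oa_def by (intro open_Compl closed_circ_image)
  have arc: "i < q \<Longrightarrow> circ ` {a i<..<b i} = S1 \<inter> Oa i" for i
    using arc_eq[of "a i" "b i"] ab by (auto simp: Oa_def)
  define V where "V = (\<Union>i\<in>{1..<q}. Oa i)"
  have "open V" unfolding V_def using Oo by blast
  have "Oa 0 \<inter> V \<inter> S1 = {}"
  proof -
    have "S1 \<inter> Oa 0 \<inter> (S1 \<inter> Oa i) = {}" if "i \<in> {1..<q}" for i
    proof -
      have "circ ` {a 0<..<b 0} \<inter> circ ` {a i<..<b i} = {}"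
        using dj that assms(2) unfolding disjoint_family_on_def by auto
      then show ?thesis using arc[of 0] arc[of i] that assms(2) by auto
    qed
    then show ?thesis unfolding V_def by blast
  qed
  moreover have "S1 \<subseteq> Oa 0 \<union> V"
  proof
    fix z assume "z \<in> S1"
    then have "z \<in> (\<Union>i<q. circ ` {a i<..<b i})" using AS Aeq by simp
    then obtain i where "i < q" "z \<in> circ ` {a i<..<b i}" by blast
    then have "z \<in> Oa i" using arc by auto
    then show "z \<in> Oa 0 \<union> V" using \<open>i < q\<close> unfolding V_def by (cases "i = 0") auto
  qed
  ultimately have "Oa 0 \<inter> S1 = {} \<or> V \<inter> S1 = {}"
    using connectedD[OF connected_S1 Oo[of 0] \<open>open V\<close>] by blast
  moreover have "Oa 0 \<inter> S1 \<noteq> {}"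
  proof -
    have "circ ((a 0 + b 0) / 2) \<in> circ ` {a 0<..<b 0}" using ab assms(2) by auto
    then show ?thesis using arc[of 0] assms(2) by auto
  qed
  moreover have "V \<inter> S1 \<noteq> {}"
  proof -
    have "circ (a 0) \<notin> circ ` {a 0<..<b 0}"
    proof
      assume "circ (a 0) \<in> circ ` {a 0<..<b 0}"
      then obtain s where s: "circ (a 0) = circ s" "a 0 < s" "s < b 0" by auto
      then have "s - a 0 \<in> \<int>" by (simp add: circ_eq_iff Ints_diff_sym)
      then show False using Ints_01[of "s - a 0"] s ab assms(2) by force
    qed
    have "circ (a 0) \<in> Oa 0 \<union> V" using \<open>S1 \<subseteq> Oa 0 \<union> V\<close> circ_S1[of "a 0"] by blast
    moreover have "circ (a 0) \<notin> Oa 0"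
    proof -
      have e: "circ (a 0) = circ (a 0 + 1)" by (simp add: circ_eq_iff)
      have "a 0 + 1 \<in> {b 0..a 0 + 1}" using ab assms(2) by auto
      then have "circ (a 0) \<in> circ ` {b 0..a 0 + 1}" unfolding e by (rule imageI)
      then show ?thesis by (simp add: Oa_def)
    qed
    ultimately show ?thesis using circ_S1[of "a 0"] by blast
  qed
  ultimately show False by blast
qed

lemma fibre_interval:
  fixes A :: "complex set"
  assumes AS: "A \<subseteq> S1" and Aop: "open {s. circ s \<in> A}" and s0: "circ s0 \<notin> A" and y: "circ y \<in> A"
    and w: "w \<in> connected_component_set A (circ y)"
  shows "\<exists>s. circ s = w \<and> (\<forall>u. min y s \<le> u \<and> u \<le> max y s \<longrightarrow> circ u \<in> A)"
proof -
  define N where "N = {s. circ s \<notin> A}"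
  have "N = - {s. circ s \<in> A}" by (auto simp: N_def)
  then have Ncl: "closed N" using Aop by (simp add: closed_def)
  have Nsh: "s \<in> N \<longleftrightarrow> s + of_int c \<in> N" for s c unfolding N_def by (simp add: circ_int_shift)
  define L where "L = {s \<in> N. s \<le> y}"
  define s1 where "s1 = s0 - of_int \<lceil>s0 - y\<rceil>"
  have "s1 \<in> N" unfolding s1_def using Nsh[of s0 "- \<lceil>s0 - y\<rceil>"] s0 by (simp add: N_def)
  moreover have "s1 \<le> y" unfolding s1_def by linarith
  ultimately have "s1 \<in> L" by (simp add: L_def)
  have Lcl: "closed L"
  proof -
    have "L = N \<inter> {..y}" by (auto simp: L_def)
    then show ?thesis using Ncl by (simp add: closed_Int)
  qed
  have Lbdd: "bdd_above L" unfolding L_def by (auto intro: bdd_aboveI[of _ y])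
  define \<alpha> where "\<alpha> = Sup L"
  have \<alpha>L: "\<alpha> \<in> L" unfolding \<alpha>_def using closed_contains_Sup[OF _ Lbdd Lcl] \<open>s1 \<in> L\<close> by blast
  have \<alpha>y: "\<alpha> < y" using \<alpha>L y by (auto simp: L_def N_def order.order_iff_strict)
  have \<alpha>R: "circ u \<in> A" if "\<alpha> < u" "u \<le> y" for u
  proof (rule ccontr)
    assume "circ u \<notin> A"
    then have "u \<in> L" using that by (simp add: L_def N_def)
    then have "u \<le> \<alpha>" unfolding \<alpha>_def using Lbdd by (rule cSup_upper)
    then show False using that by simp
  qed
  define R where "R = {s \<in> N. y \<le> s}"
  define s2 where "s2 = s0 + of_int \<lceil>y - s0\<rceil>"
  have "s2 \<in> N" unfolding s2_def using Nsh[of s0 "\<lceil>y - s0\<rceil>"] s0 by (simp add: N_def)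
  moreover have "y \<le> s2" unfolding s2_def by linarith
  ultimately have "s2 \<in> R" by (simp add: R_def)
  have Rcl: "closed R"
  proof -
    have "R = N \<inter> {y..}" by (auto simp: R_def)
    then show ?thesis using Ncl by (simp add: closed_Int)
  qed
  have Rbdd: "bdd_below R" unfolding R_def by (auto intro: bdd_belowI[of _ y])
  define \<beta> where "\<beta> = Inf R"
  have \<beta>R: "\<beta> \<in> R" unfolding \<beta>_def using closed_contains_Inf[OF _ Rbdd Rcl] \<open>s2 \<in> R\<close> by blast
  have y\<beta>: "y < \<beta>" using \<beta>R y by (auto simp: R_def N_def order.order_iff_strict)
  have \<beta>A: "circ u \<in> A" if "y \<le> u" "u < \<beta>" for u
  proof (rule ccontr)
    assume "circ u \<notin> A"
    then have "u \<in> R" using that by (simp add: R_def N_def)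
    then have "\<beta> \<le> u" unfolding \<beta>_def using Rbdd by (rule cInf_lower)
    then show False using that by simp
  qed
  have \<alpha>N: "circ \<alpha> \<notin> A" using \<alpha>L by (simp add: L_def N_def)
  have \<beta>N: "circ \<beta> \<notin> A" using \<beta>R by (simp add: R_def N_def)
  have \<alpha>1N: "circ (\<alpha> + 1) \<notin> A" using \<alpha>N circ_int_shift[of 1 \<alpha>] by simp
  have "y < \<alpha> + 1"
  proof (rule ccontr)
    assume "\<not> y < \<alpha> + 1"
    then have "\<alpha> + 1 \<in> L" using \<alpha>1N by (simp add: L_def N_def)
    then have "\<alpha> + 1 \<le> \<alpha>" unfolding \<alpha>_def using Lbdd by (rule cSup_upper)
    then show False by simp
  qed
  then have "\<alpha> + 1 \<in> R" using \<alpha>1N by (simp add: R_def N_def)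
  then have \<beta>\<alpha>: "\<beta> \<le> \<alpha> + 1" unfolding \<beta>_def using Rbdd by (rule cInf_lower)
  have inA: "circ u \<in> A" if "\<alpha> < u" "u < \<beta>" for u
  proof (cases "u \<le> y")
    case True then show ?thesis using \<alpha>R that by blast
  next
    case False then show ?thesis using \<beta>A that by simp
  qed
  define c where "c = connected_component_set A (circ y)"
  define K1 where "K1 = circ ` {\<alpha>..\<beta>}"
  define K2 where "K2 = circ ` {\<beta>..\<alpha>+1}"
  have cA: "c \<subseteq> A" unfolding c_def by (rule connected_component_subset)
  have cc: "connected c" unfolding c_def by simp
  have cK: "c \<subseteq> K1 \<union> K2"
  proof
    fix z assume "z \<in> c"
    then have "z \<in> S1" using cA AS by blast
    then obtain t where t: "z = circ t" "\<alpha> \<le> t" "t < \<alpha> + 1" using S1_reduce[of z \<alpha>] by blast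
    show "z \<in> K1 \<union> K2"
    proof (cases "t \<le> \<beta>")
      case True then show ?thesis using t by (auto simp: K1_def)
    next
      case False then show ?thesis using t by (auto simp: K2_def)
    qed
  qed
  have cK12: "K1 \<inter> K2 \<inter> c = {}"
  proof (rule ccontr)
    assume "K1 \<inter> K2 \<inter> c \<noteq> {}"
    then obtain z where z: "z \<in> K1" "z \<in> K2" "z \<in> c" by blast
    obtain t1 where t1: "z = circ t1" "\<alpha> \<le> t1" "t1 \<le> \<beta>" using z(1) by (auto simp: K1_def)
    obtain t2 where t2: "z = circ t2" "\<beta> \<le> t2" "t2 \<le> \<alpha> + 1" using z(2) by (auto simp: K2_def)
    have d: "t2 - t1 \<in> \<int>" using t1 t2 by (simp add: circ_eq_iff)
    have zA: "z \<in> A" using z cA by blast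
    show False
    proof (cases "t2 - t1 = 0")
      case True
      then have "t1 = \<beta>" using t1 t2 by simp
      then show False using zA t1 \<beta>N by simp
    next
      case False
      have "\<not> (0 < t2 - t1 \<and> t2 - t1 < 1)" using Ints_01[OF d] by blast
      then have "t2 - t1 = 1" using False t1 t2 by linarith
      then have "t1 = \<alpha>" using t1 t2 by linarith
      then show False using zA t1 \<alpha>N by simp
    qed
  qed
  have "K1 \<inter> c = {} \<or> K2 \<inter> c = {}"
    by (rule connected_closedD[OF cc cK12 cK]) (auto simp: K1_def K2_def intro: closed_circ_image)
  moreover have "circ y \<in> K1 \<inter> c" using \<alpha>y y\<beta> y by (auto simp: K1_def c_def)
  ultimately have "K2 \<inter> c = {}" by blast
  then have "c \<subseteq> K1" using cK by blast
  then obtain s where s: "w = circ s" "\<alpha> \<le> s" "s \<le> \<beta>" using w by (auto simp: K1_def c_def)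
  have "w \<in> A" using w cA c_def by blast
  then have "s \<noteq> \<alpha>" "s \<noteq> \<beta>" using s \<alpha>N \<beta>N by auto
  then have "\<alpha> < s" "s < \<beta>" using s by auto
  then show ?thesis using s \<alpha>y y\<beta> inA by (intro exI[of _ s]) auto
qed


locale tsetup =
  fixes \<omega> :: real and T :: "complex \<times> complex \<Rightarrow> complex \<times> complex" and p q :: nat and k :: int and l :: nat
    and U1 :: "(complex \<times> complex) set" and C :: "nat \<Rightarrow> (complex \<times> complex) set"
    and h :: "nat \<Rightarrow> nat \<Rightarrow> real \<Rightarrow> real" and m n :: nat and F :: "real \<times> real \<Rightarrow> real \<times> real"
  assumes Thom: "T_hom \<omega> T"
    and ptube: "pq_tube T p q U1"
    and Cpiece: "\<And>i. i < p \<Longrightarrow> C i \<subseteq> (T ^^ i) ` U1"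
    and Ccard: "\<And>i z c. i < p \<Longrightarrow> z \<in> S1 \<Longrightarrow> c \<in> components (tfibre ((T ^^ i) ` U1) z) \<Longrightarrow> card (c \<inter> tfibre (C i) z) = 1"
    and hlift: "\<And>i j. i < p \<Longrightarrow> j < q \<Longrightarrow> qcurve_lift q k (C i) (h i j)"
    and h0: "\<And>i j. i < p \<Longrightarrow> j < q \<Longrightarrow> 0 \<le> h i j 0 \<and> h i j 0 < 1"
    and hord: "\<And>i j i' j'. i < p \<Longrightarrow> j < q \<Longrightarrow> i' < p \<Longrightarrow> j' < q \<Longrightarrow> i + j * p < i' + j' * p \<Longrightarrow> h i j 0 < h i' j' 0"
    and mp: "m < p" and nq: "n < q"
    and Flift: "is_lift T F" and Ffst: "\<And>\<theta> x. fst (F (\<theta>, x)) = \<theta> + \<omega>"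
    and Fcomp: "F ` connected_component_set (pi2 -` U1) (0, h 0 0 0) = connected_component_set (pi2 -` ((T ^^ m) ` U1)) (0, h m n 0)"
    and ldef: "l = m + n * p"

lemma tsetup_of_twj:
  assumes "T_hom \<omega> T" "tube_wind_jump \<omega> T p q k l U1"
  shows "\<exists>C h m n F. tsetup \<omega> T p q k l U1 C h m n F"
proof -
  obtain C h m n F where
    A: "\<forall>i<p. C i \<subseteq> (T ^^ i) ` U1 \<and>
           (\<forall>z\<in>S1. \<forall>c\<in>components (tfibre ((T ^^ i) ` U1) z). card (c \<inter> tfibre (C i) z) = 1) \<and>
           (\<forall>j<q. qcurve_lift q k (C i) (h i j) \<and> 0 \<le> h i j 0 \<and> h i j 0 < 1)"
    and B: "\<forall>i j i' j'. i < p \<longrightarrow> j < q \<longrightarrow> i' < p \<longrightarrow> j' < q \<longrightarrow>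
           i + j * p < i' + j' * p \<longrightarrow> h i j 0 < h i' j' 0"
    and D: "m < p" "n < q" "is_lift T F" "\<forall>\<theta> x. fst (F (\<theta>, x)) = \<theta> + \<omega>"
        "F ` connected_component_set (pi2 -` U1) (0, h 0 0 0)
          = connected_component_set (pi2 -` ((T ^^ m) ` U1)) (0, h m n 0)" "l = m + n * p"
    and P: "pq_tube T p q U1"
    using assms(2) unfolding tube_wind_jump_def by blast
  have "tsetup \<omega> T p q k l U1 C h m n F"
    by (unfold_locales) (use assms(1) A B D P in auto)
  then show ?thesis by blast
qed

context tsetup
begin

lemma p0: "0 < p" using ptube unfolding pq_tube_def by blast
lemma tube1: "tube1 (T ^^ p) q U1" using ptube unfolding pq_tube_def by blast
lemma q0: "0 < q" using tube1 unfolding tube1_def by blast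
lemma U1_torus: "U1 \<subseteq> torus" using tube1 unfolding tube1_def by blast
lemma U1_open: "openin (top_of_set torus) U1" using tube1 unfolding tube1_def by blast
lemma U1_inv: "(T ^^ p) ` U1 = U1" using tube1 unfolding tube1_def by blast
lemma U1_arcs: "z \<in> S1 \<Longrightarrow> q_arcs q (tfibre U1 z)" using tube1 unfolding tube1_def by blast
lemma pieces_disj: "disjoint_family_on (\<lambda>i. (T ^^ i) ` U1) {..<p}" using ptube unfolding pq_tube_def by blast

definition P :: "nat \<Rightarrow> (complex \<times> complex) set" where "P i = (T ^^ i) ` U1"
definition U :: "(complex \<times> complex) set" where "U = (\<Union>i<p. P i)"

lemma P_torus: "P i \<subseteq> torus" unfolding P_def by (rule T_hom_pow_sub[OF Thom U1_torus])
lemma P_open: "openin (top_of_set torus) (P i)" unfolding P_def by (rule T_hom_pow_open[OF Thom U1_open])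
lemma P_Suc: "T ` P i = P (Suc i)" unfolding P_def by (simp add: image_comp)
lemma P_p: "P p = P 0" unfolding P_def using U1_inv by simp
lemma P_disj: "i < p \<Longrightarrow> j < p \<Longrightarrow> i \<noteq> j \<Longrightarrow> P i \<inter> P j = {}"
  using pieces_disj unfolding disjoint_family_on_def P_def by auto
lemma U_torus: "U \<subseteq> torus" unfolding U_def using P_torus by blast
lemma TU: "T ` U \<subseteq> U"
proof
  fix v assume "v \<in> T ` U"
  then obtain i u where iu: "i < p" "u \<in> P i" "v = T u" unfolding U_def by blast
  then have v: "v \<in> P (Suc i)" using P_Suc by blast
  show "v \<in> U"
  proof (cases "Suc i < p")
    case True then show ?thesis using v unfolding U_def by blast
  next
    case False
    then have "Suc i = p" using iu by simp
    then have "v \<in> P 0" using v P_p by simp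
    then show ?thesis using p0 unfolding U_def by blast
  qed
qed

lemma T_pre_U: assumes "v \<in> torus" "T v \<in> U" shows "v \<in> U"
proof -
  obtain i where i: "i < p" "T v \<in> P i" using assms(2) unfolding U_def by blast
  define i' where "i' = (if i = 0 then p - 1 else i - 1)"
  have i': "i' < p" "Suc i' = (if i = 0 then p else i)" using i p0 by (auto simp: i'_def)
  have "P i = P (Suc i')" using i' P_p by (cases "i = 0") auto
  then have "T v \<in> T ` P i'" using i P_Suc by simp
  then obtain u where u: "u \<in> P i'" "T u = T v" by auto
  have "u = v" using T_hom_inj[OF Thom] u assms(1) P_torus by (meson inj_onD subsetD)
  then show ?thesis using u i' unfolding U_def by blast
qed

lemma open_pre: assumes "openin (top_of_set torus) W" shows "open (pi2 -` W)"
proof -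
  obtain V where V: "open V" "W = torus \<inter> V" using assms by (auto simp: openin_open)
  have "pi2 -` W = pi2 -` V" using V(2) pi2_torus by blast
  then show ?thesis using V(1) open_vimage[OF V(1) continuous_pi2] by simp
qed

lemma U_open: "openin (top_of_set torus) U" unfolding U_def using P_open by blast
lemma OU: "open (pi2 -` U)" by (rule open_pre[OF U_open])
lemma OP: "open (pi2 -` P i)" by (rule open_pre[OF P_open])

end


context tsetup
begin

definition ix :: "int \<Rightarrow> nat" where "ix N = nat (N mod int p)"
definition G :: "int \<Rightarrow> real \<Rightarrow> real" where
  "G N t = h (nat (N mod int p)) (nat ((N div int p) mod int q)) t + of_int (N div (int p * int q))"

lemma ix_lt: "ix N < p" unfolding ix_def using p0 by (simp add: nat_less_iff)

lemma idx_arith: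
  assumes "i < p" "j < q"
  shows "(int i + int j * int p + c * (int p * int q)) mod int p = int i"
    "((int i + int j * int p + c * (int p * int q)) div int p) mod int q = int j"
    "(int i + int j * int p + c * (int p * int q)) div (int p * int q) = c"
proof -
  define N where "N = int i + int j * int p + c * (int p * int q)"
  have N: "N = int i + int p * (int j + c * int q)" unfolding N_def by (simp add: algebra_simps)
  have pp: "int p > 0" using p0 by simp
  have qq: "int q > 0" using q0 by simp
  have m: "N mod int p = int i" unfolding N using assms(1) by simp
  have d: "N div int p = int j + c * int q" unfolding N using assms(1) pp by simp
  have d2: "(int j + c * int q) mod int q = int j" using assms(2) by simp
  have d3: "(int j + c * int q) div int q = c" using assms(2) by simp
  show "N mod int p = int i" by (rule m)
  show "(N div int p) mod int q = int j" using d d2 by simp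
  have "N div (int p * int q) = (N div int p) div int q" by (rule zdiv_zmult2_eq) (use qq in simp)
  then show "N div (int p * int q) = c" using d d3 by simp
qed

lemma G_idx: assumes "i < p" "j < q"
  shows "G (int i + int j * int p + c * (int p * int q)) t = h i j t + of_int c"
  unfolding G_def using idx_arith[OF assms, of c] by simp

lemma ix_idx: assumes "i < p" "j < q" shows "ix (int i + int j * int p + c * (int p * int q)) = i"
  unfolding ix_def using idx_arith[OF assms, of c] by simp

lemma G_decomp: obtains i j c where "i < p" "j < q" "N = int i + int j * int p + c * (int p * int q)"
proof -
  define i where "i = nat (N mod int p)"
  define j where "j = nat ((N div int p) mod int q)"
  define c where "c = N div (int p * int q)"
  have pp: "int p > 0" using p0 by simp
  have qq: "int q > 0" using q0 by simp
  have i: "i < p" "int i = N mod int p" unfolding i_def using pp by (auto simp: nat_less_iff)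
  have j: "j < q" "int j = (N div int p) mod int q" unfolding j_def using qq by (auto simp: nat_less_iff)
  have c: "c = (N div int p) div int q" unfolding c_def by (rule zdiv_zmult2_eq) (use qq in simp)
  have "N = N mod int p + int p * (N div int p)" by simp
  also have "N div int p = (N div int p) mod int q + int q * ((N div int p) div int q)" by simp
  finally have "N = int i + int p * (int j + int q * c)" using i j c by simp
  then have "N = int i + int j * int p + c * (int p * int q)" by (simp add: algebra_simps)
  then show ?thesis using that i j by blast
qed

lemma G_lift: "qcurve_lift q k (C (ix N)) (G N)"
proof -
  obtain i j c where ijc: "i < p" "j < q" "N = int i + int j * int p + c * (int p * int q)" by (rule G_decomp)
  have "G N = (\<lambda>t. h i j t + of_int c)" using G_idx[OF ijc(1,2)] ijc(3) by auto
  moreover have "ix N = i" using ix_idx[OF ijc(1,2)] ijc(3) by simp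
  ultimately show ?thesis using ql_shift_val[OF hlift[OF ijc(1,2)], of "of_int c"] by simp
qed

lemma G_cont: "continuous_on UNIV (G N)" using G_lift ql_cont by blast

lemma G_C: "pi2 (t, G N t) \<in> C (ix N)"
  using ql_img[OF G_lift[of N]] by blast

lemma G_P: "pi2 (t, G N t) \<in> P (ix N)"
  using G_C Cpiece[OF ix_lt] unfolding P_def by blast

lemma G_U: "pi2 (t, G N t) \<in> U"
  using G_P ix_lt unfolding U_def by blast

lemma G_per_int: "G (N + c * (int p * int q)) t = G N t + of_int c"
proof -
  obtain i j c' where ijc: "i < p" "j < q" "N = int i + int j * int p + c' * (int p * int q)" by (rule G_decomp)
  have e: "N + c * (int p * int q) = int i + int j * int p + (c' + c) * (int p * int q)" using ijc(3) by (simp add: algebra_simps)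
  have "G (N + c * (int p * int q)) t = h i j t + of_int (c' + c)" unfolding e by (rule G_idx[OF ijc(1,2)])
  moreover have "G N t = h i j t + of_int c'" unfolding ijc(3) by (rule G_idx[OF ijc(1,2)])
  ultimately show ?thesis by simp
qed

lemma G_per: "G (N + int p * int q) t = G N t + 1"
  using G_per_int[of N 1 t] by simp

lemma G0_step: "G N 0 < G (N + 1) 0"
proof -
  obtain i j c where ijc: "i < p" "j < q" "N = int i + int j * int p + c * (int p * int q)" by (rule G_decomp)
  have GN: "G N 0 = h i j 0 + of_int c" using G_idx[OF ijc(1,2)] ijc(3) by simp
  show ?thesis
  proof (cases "Suc i < p")
    case True
    have e: "N + 1 = int (Suc i) + int j * int p + c * (int p * int q)" using ijc(3) by simp
    have "G (N + 1) 0 = h (Suc i) j 0 + of_int c" unfolding e by (rule G_idx[OF True ijc(2)])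
    moreover have "h i j 0 < h (Suc i) j 0" using hord[OF ijc(1,2) True ijc(2)] by simp
    ultimately show ?thesis using GN by simp
  next
    case False
    then have ip: "Suc i = p" using ijc(1) by simp
    show ?thesis
    proof (cases "Suc j < q")
      case True
      have "int i + 1 = int p" using ip by linarith
      then have e: "N + 1 = int 0 + int (Suc j) * int p + c * (int p * int q)" using ijc(3)
        by (simp add: algebra_simps)
      have "G (N + 1) 0 = h 0 (Suc j) 0 + of_int c" unfolding e by (rule G_idx[OF p0 True])
      moreover have "h i j 0 < h 0 (Suc j) 0"
        using hord[OF ijc(1,2) p0 True] ip by (simp add: algebra_simps)
      ultimately show ?thesis using GN by simp
    next
      case False
      then have jq: "Suc j = q" using ijc(2) by simp
      have "int i + 1 = int p" using ip by linarith
      moreover have "int j + 1 = int q" using jq by linarith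
      ultimately have "int i + int j * int p + 1 = int p * int q"
        by (metis (no_types, opaque_lifting) add.commute add.left_commute distrib_left mult.commute mult.right_neutral)
      then have e: "N + 1 = int 0 + int 0 * int p + (c + 1) * (int p * int q)" using ijc(3)
        by (simp add: algebra_simps)
      have "G (N + 1) 0 = h 0 0 0 + of_int (c + 1)" unfolding e by (rule G_idx[OF p0 q0])
      moreover have "h i j 0 < 1" "0 \<le> h 0 0 0" using h0[OF ijc(1,2)] h0[OF p0 q0] by auto
      ultimately show ?thesis using GN by simp
    qed
  qed
qed

lemma G0_mono: assumes "N < N'" shows "G N 0 < G N' 0"
proof -
  have "G N 0 < G (N + int d + 1) 0" for d :: nat
  proof (induction d)
    case 0 then show ?case using G0_step by simp
  next
    case (Suc d)
    then show ?case using G0_step[of "N + int d + 1"] by (simp add: algebra_simps)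
  qed
  moreover have "N' = N + int (nat (N' - N - 1)) + 1" using assms by simp
  ultimately show ?thesis by metis
qed

lemma G0_inj: "G N 0 = G N' 0 \<Longrightarrow> N = N'"
  using G0_mono[of N N'] G0_mono[of N' N] by (cases "N < N'"; cases "N' < N") auto

end


context tsetup
begin

definition J :: "real \<Rightarrow> real \<Rightarrow> real \<Rightarrow> bool" where
  "J \<theta> y y' \<longleftrightarrow> (\<forall>s. min y y' \<le> s \<and> s \<le> max y y' \<longrightarrow> pi2 (\<theta>, s) \<in> U)"

definition S :: "int \<Rightarrow> (real \<times> real) set" where
  "S N = {v. J (fst v) (snd v) (G N (fst v))}"

lemma one_piece:
  assumes "connected K" "K \<subseteq> pi2 -` U" "x \<in> K"
  obtains i where "i < p" "K \<subseteq> pi2 -` P i"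
proof -
  obtain i where i: "i < p" "x \<in> pi2 -` P i" using assms(2,3) unfolding U_def by blast
  define B where "B = (\<Union>j\<in>{j. j < p \<and> j \<noteq> i}. pi2 -` P j)"
  have "open B" unfolding B_def using OP by blast
  have "pi2 -` P i \<inter> B \<inter> K = {}" unfolding B_def using P_disj i(1) by blast
  moreover have "K \<subseteq> pi2 -` P i \<union> B" using assms(2) unfolding B_def U_def by blast
  ultimately have "K \<subseteq> pi2 -` P i"
    using connected_open_sub[OF assms(1) OP \<open>open B\<close>] i(2) assms(3) by blast
  then show ?thesis using that i(1) by blast
qed

lemma P_ix_unique: "i < p \<Longrightarrow> j < p \<Longrightarrow> v \<in> P i \<Longrightarrow> v \<in> P j \<Longrightarrow> i = j"
  using P_disj by blast

lemma NF: "\<exists>s. pi2 (\<theta>, s) \<notin> U"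
proof (rule ccontr)
  assume "\<not> (\<exists>s. pi2 (\<theta>, s) \<notin> U)"
  then have all: "\<And>s. pi2 (\<theta>, s) \<in> U" by blast
  define K where "K = (\<lambda>s. (\<theta>, s)) ` (UNIV :: real set)"
  have "connected K" unfolding K_def
    by (intro connected_continuous_image connected_UNIV continuous_intros)
  moreover have "K \<subseteq> pi2 -` U" using all unfolding K_def by auto
  ultimately obtain i where i: "i < p" "K \<subseteq> pi2 -` P i" using one_piece[of K "(\<theta>, 0)"] unfolding K_def by blast
  have full: "\<forall>w\<in>S1. (circ \<theta>, w) \<in> (T ^^ i) ` U1"
  proof
    fix w assume "w \<in> S1"
    then obtain s where "w = circ s" using S1_circ by blast
    moreover have "(\<theta>, s) \<in> K" unfolding K_def by simp
    ultimately show "(circ \<theta>, w) \<in> (T ^^ i) ` U1" using i(2) unfolding P_def pi2_def by auto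
  qed
  obtain z' where z': "z' \<in> S1" "\<forall>w'\<in>S1. (z', w') \<in> (T ^^ (p - i)) ` ((T ^^ i) ` U1)"
    using T_hom_pow_full[OF Thom circ_S1 full] by blast
  have "(T ^^ (p - i)) ` ((T ^^ i) ` U1) = (T ^^ p) ` U1"
    using i(1) by (simp add: image_comp funpow_add[symmetric])
  then have "\<forall>w'\<in>S1. (z', w') \<in> U1" using z' U1_inv by simp
  then have "tfibre U1 z' = S1" using U1_torus unfolding tfibre_def torus_def by auto
  then show False using q_arcs_not_full[OF U1_arcs[OF z'(1)] q0] by simp
qed

lemma J_full: assumes "J \<theta> y y'" "1 \<le> \<bar>y - y'\<bar>" shows False
proof -
  obtain s where s: "pi2 (\<theta>, s) \<notin> U" using NF by blast
  define a where "a = min y y'"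
  define s' where "s' = s - of_int \<lfloor>s - a\<rfloor>"
  have "a \<le> s'" "s' < a + 1" unfolding s'_def by linarith+
  then have "min y y' \<le> s'" "s' \<le> max y y'" using assms(2) unfolding a_def by auto
  then have "pi2 (\<theta>, s') \<in> U" using assms(1) unfolding J_def by blast
  moreover have "pi2 (\<theta>, s') = pi2 (\<theta>, s)" unfolding s'_def by (simp add: pi2_eq_iff)
  ultimately show False using s by simp
qed

lemma J_sym: "J \<theta> y y' \<longleftrightarrow> J \<theta> y' y" unfolding J_def by (simp add: min.commute max.commute)

lemma J_trans: "J \<theta> y g \<Longrightarrow> J \<theta> y' g \<Longrightarrow> J \<theta> y y'"
  unfolding J_def by (smt (verit))

lemma J_refl: "pi2 (\<theta>, y) \<in> U \<Longrightarrow> J \<theta> y y"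
  unfolding J_def by auto

lemma J_sub: "J \<theta> y g \<Longrightarrow> min y g \<le> y' \<Longrightarrow> y' \<le> max y g \<Longrightarrow> J \<theta> y' g"
  unfolding J_def by (smt (verit))

lemma J_mem: "J \<theta> y g \<Longrightarrow> pi2 (\<theta>, y) \<in> U"
  unfolding J_def by auto

lemma pi2_fibre: "pi2 (\<theta>, s) \<in> W \<longleftrightarrow> circ s \<in> tfibre W (circ \<theta>)"
  by (simp add: pi2_def tfibre_def)

lemma J_G_eq: assumes "J \<theta> (G N \<theta>) (G N' \<theta>)" shows "N = N'"
proof -
  define a where "a = min (G N \<theta>) (G N' \<theta>)"
  define b where "b = max (G N \<theta>) (G N' \<theta>)"
  define K where "K = (\<lambda>s. (\<theta>, s)) ` {a..b}"
  have Kc: "connected K" unfolding K_def by (intro connected_continuous_image connected_Icc continuous_intros)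
  have KU: "K \<subseteq> pi2 -` U" using assms unfolding K_def J_def a_def b_def by auto
  have NK: "(\<theta>, G N \<theta>) \<in> K" "(\<theta>, G N' \<theta>) \<in> K" unfolding K_def a_def b_def by auto
  obtain i where i: "i < p" "K \<subseteq> pi2 -` P i" using one_piece[OF Kc KU NK(1)] by blast
  have iN: "ix N = i" using P_ix_unique[OF ix_lt i(1) G_P] i(2) NK(1) by blast
  have iN': "ix N' = i" using P_ix_unique[OF ix_lt i(1) G_P] i(2) NK(2) by blast
  define A where "A = tfibre (P i) (circ \<theta>)"
  have cA: "circ ` {a..b} \<subseteq> A"
  proof
    fix z assume "z \<in> circ ` {a..b}"
    then obtain s where s: "z = circ s" "s \<in> {a..b}" by blast
    then have "(\<theta>, s) \<in> K" unfolding K_def by blast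
    then have "pi2 (\<theta>, s) \<in> P i" using i(2) by blast
    then show "z \<in> A" unfolding A_def s(1) pi2_fibre .
  qed
  have yA: "circ (G N \<theta>) \<in> A" using cA a_def b_def by auto
  define c where "c = connected_component_set A (circ (G N \<theta>))"
  have "c \<in> components A" unfolding c_def using yA by (rule componentsI)
  then have card1: "card (c \<inter> tfibre (C i) (circ \<theta>)) = 1" using Ccard[OF i(1) circ_S1] unfolding A_def P_def by blast
  have "connected (circ ` {a..b})" by (intro connected_continuous_image connected_Icc continuous_intros)
  then have sub: "circ ` {a..b} \<subseteq> c" unfolding c_def
    using connected_component_maximal[of "circ (G N \<theta>)" "circ ` {a..b}" A] cA a_def b_def by auto
  have m1: "circ (G N \<theta>) \<in> c \<inter> tfibre (C i) (circ \<theta>)"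
    using sub G_C[of \<theta> N] iN a_def b_def by (auto simp: pi2_def tfibre_def)
  have m2: "circ (G N' \<theta>) \<in> c \<inter> tfibre (C i) (circ \<theta>)"
    using sub G_C[of \<theta> N'] iN' a_def b_def by (auto simp: pi2_def tfibre_def)
  have "circ (G N \<theta>) = circ (G N' \<theta>)" using card1 m1 m2 by (metis card_1_singletonE singletonD)
  then have d: "G N \<theta> - G N' \<theta> \<in> \<int>" by (simp add: circ_eq_iff)
  have "G N \<theta> = G N' \<theta>"
  proof (rule ccontr)
    assume "G N \<theta> \<noteq> G N' \<theta>"
    then have "1 \<le> \<bar>G N \<theta> - G N' \<theta>\<bar>" using d by (metis Ints_nonzero_abs_ge1 right_minus_eq)
    then show False using J_full[OF assms] by blast
  qed
  then have "G N' = G N" using ql_eq[OF G_lift[of N] _ q0] G_lift[of N'] iN iN' by metis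
  then show ?thesis using G0_inj by metis
qed

lemma S_disj: assumes "v \<in> S N" "v \<in> S N'" shows "N = N'"
proof -
  have "J (fst v) (snd v) (G N (fst v))" "J (fst v) (snd v) (G N' (fst v))" using assms by (auto simp: S_def)
  then have "J (fst v) (G N (fst v)) (G N' (fst v))" using J_trans J_sym by blast
  then show ?thesis by (rule J_G_eq)
qed

lemma lift_is_G: assumes "i < p" "qcurve_lift q k (C i) g" shows "\<exists>N. ix N = i \<and> G N = g"
proof -
  have "\<forall>j. \<exists>a c. j < q \<longrightarrow> a < q \<and> c \<in> \<int> \<and> (\<forall>t. h i j t = h i 0 (t + real a) + c)"
    using ql_unique[OF hlift[OF assms(1) q0] hlift[OF assms(1)] q0] by blast
  then obtain A Cc where AC: "\<And>j. j < q \<Longrightarrow> A j < q \<and> Cc j \<in> \<int> \<and> (\<forall>t. h i j t = h i 0 (t + real (A j)) + Cc j)"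
    by metis
  have inj: "inj_on A {..<q}"
  proof
    fix j j' assume j: "j \<in> {..<q}" "j' \<in> {..<q}" "A j = A j'"
    have e: "h i j 0 - h i j' 0 = Cc j - Cc j'" using AC[of j] AC[of j'] j by auto
    have "Cc j - Cc j' \<in> \<int>" using AC[of j] AC[of j'] j by auto
    moreover have "\<bar>h i j 0 - h i j' 0\<bar> < 1" using h0[OF assms(1), of j] h0[OF assms(1), of j'] j by auto
    ultimately have "h i j 0 = h i j' 0" using e by (metis Ints_nonzero_abs_ge1 right_minus_eq not_le)
    moreover have "j < j' \<Longrightarrow> h i j 0 < h i j' 0" using hord[of i j i j'] assms(1) j p0 by simp
    moreover have "j' < j \<Longrightarrow> h i j' 0 < h i j 0" using hord[of i j' i j] assms(1) j p0 by simp
    ultimately show "j = j'" by (cases "j < j'"; cases "j' < j") auto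
  qed
  have "A ` {..<q} = {..<q}" by (rule endo_inj_surj) (use AC inj in auto)
  obtain a c where ac: "a < q" "c \<in> \<int>" "\<And>t. g t = h i 0 (t + real a) + c"
    using ql_unique[OF hlift[OF assms(1) q0] assms(2) q0] by blast
  obtain j where j: "j < q" "A j = a" using \<open>A ` {..<q} = {..<q}\<close> ac(1) by (metis imageE lessThan_iff)
  have "c - Cc j \<in> \<int>" using ac(2) AC[OF j(1)] by auto
  then obtain E :: int where E: "c - Cc j = of_int E" by (auto elim: Ints_cases)
  have "\<And>t. g t = h i j t + of_int E" using ac(3) AC[OF j(1)] j(2) E by (simp add: algebra_simps)
  moreover have "\<And>t. G (int i + int j * int p + E * (int p * int q)) t = h i j t + of_int E"
    by (rule G_idx[OF assms(1) j(1)])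
  moreover have "ix (int i + int j * int p + E * (int p * int q)) = i" by (rule ix_idx[OF assms(1) j(1)])
  ultimately show ?thesis by (intro exI[of _ "int i + int j * int p + E * (int p * int q)"]) auto
qed

lemma C_point_G: assumes "i < p" "pi2 (\<theta>, s) \<in> C i" shows "\<exists>N. ix N = i \<and> G N \<theta> = s"
proof -
  obtain t where t: "pi2 (\<theta>, s) = pi2 (t, h i 0 t)" using assms(2) ql_img[OF hlift[OF assms(1) q0]] by blast
  then have ts: "t - \<theta> \<in> \<int>" "s - h i 0 t \<in> \<int>" by (auto simp: pi2_eq_iff Ints_diff_sym)
  define g where "g = (\<lambda>x. h i 0 (x + (t - \<theta>)) + (s - h i 0 t))"
  have "qcurve_lift q k (C i) g" unfolding g_def
    by (intro ql_shift_val ql_shift_arg hlift assms(1) q0 ts)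
  moreover have "g \<theta> = s" unfolding g_def by simp
  ultimately show ?thesis using lift_is_G[OF assms(1)] by metis
qed

end


context tsetup
begin

lemma S_graph: "(\<theta>, G N \<theta>) \<in> S N"
  unfolding S_def using J_refl[OF G_U] by simp

lemma S_sub: "v \<in> S N \<Longrightarrow> pi2 v \<in> U"
  unfolding S_def using J_mem by (metis mem_Collect_eq prod.collapse)

lemma S_width: "v \<in> S N \<Longrightarrow> \<bar>snd v - G N (fst v)\<bar> < 1"
  unfolding S_def using J_full by (metis mem_Collect_eq not_le)

lemma S_cover: assumes "pi2 (\<theta>, y) \<in> U" shows "\<exists>N. (\<theta>, y) \<in> S N"
proof -
  obtain i where i: "i < p" "pi2 (\<theta>, y) \<in> P i" using assms unfolding U_def by blast
  define A where "A = tfibre (P i) (circ \<theta>)"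
  have AS: "A \<subseteq> S1" using P_torus unfolding A_def tfibre_def torus_def by auto
  have "{s. circ s \<in> A} = (\<lambda>s. (\<theta>, s)) -` (pi2 -` P i)" unfolding A_def
    by (simp add: set_eq_iff pi2_fibre)
  then have Aop: "open {s. circ s \<in> A}"
    using open_vimage[OF OP[of i], of "\<lambda>s. (\<theta>, s)"] by (simp add: continuous_intros)
  obtain s0 where "pi2 (\<theta>, s0) \<notin> U" using NF by blast
  then have s0: "circ s0 \<notin> A" using i(1) unfolding A_def U_def by (auto simp: pi2_fibre)
  have y: "circ y \<in> A" using i(2) unfolding A_def by (simp add: pi2_fibre)
  define c where "c = connected_component_set A (circ y)"
  have "c \<in> components A" unfolding c_def using y by (rule componentsI)
  then have "card (c \<inter> tfibre (C i) (circ \<theta>)) = 1" using Ccard[OF i(1) circ_S1] unfolding A_def P_def by blast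
  then obtain w where w: "w \<in> c" "w \<in> tfibre (C i) (circ \<theta>)" by (metis card_1_singletonE insert_iff Int_iff)
  obtain s where s: "circ s = w" "\<forall>u. min y s \<le> u \<and> u \<le> max y s \<longrightarrow> circ u \<in> A"
    using fibre_interval[OF AS Aop s0 y] w(1) unfolding c_def by blast
  have "pi2 (\<theta>, s) \<in> C i" using w(2) s(1) by (simp add: pi2_fibre)
  then obtain N where N: "ix N = i" "G N \<theta> = s" using C_point_G[OF i(1)] by blast
  have "J \<theta> y s" unfolding J_def using s(2) i(1) unfolding A_def U_def by (auto simp: pi2_fibre)
  then show ?thesis using N unfolding S_def by auto
qed

lemma S_open: "open (S N)"
  unfolding open_dist
proof (intro ballI)
  fix v0 assume v0: "v0 \<in> S N"
  obtain \<theta>0 y0 where v0e: "v0 = (\<theta>0, y0)" by (cases v0)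
  define g where "g = G N"
  have gc: "continuous_on UNIV g" unfolding g_def by (rule G_cont)
  define a0 where "a0 = min y0 (g \<theta>0)"
  define b0 where "b0 = max y0 (g \<theta>0)"
  define K0 where "K0 = (\<lambda>s. (\<theta>0, s)) ` {a0..b0}"
  have K0c: "compact K0" unfolding K0_def by (intro compact_continuous_image compact_Icc continuous_intros)
  have K0U: "K0 \<subseteq> \<Union>{pi2 -` U}" using v0 unfolding K0_def S_def J_def v0e a0_def b0_def g_def by auto
  obtain \<epsilon> where \<epsilon>: "0 < \<epsilon>" "\<And>x. x \<in> K0 \<Longrightarrow> \<exists>G \<in> {pi2 -` U}. ball x \<epsilon> \<subseteq> G"
    using Heine_Borel_lemma[OF K0c K0U] OU by blast
  then have ball: "\<And>x. x \<in> K0 \<Longrightarrow> ball x \<epsilon> \<subseteq> pi2 -` U" by blast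
  obtain \<delta> where \<delta>: "0 < \<delta>" "\<And>\<theta>. dist \<theta> \<theta>0 < \<delta> \<Longrightarrow> dist (g \<theta>) (g \<theta>0) < \<epsilon> / 2"
    using gc \<epsilon>(1) unfolding continuous_on_iff by (metis UNIV_I half_gt_zero)
  define r where "r = min \<delta> (\<epsilon> / 2)"
  show "\<exists>e>0. \<forall>v. dist v v0 < e \<longrightarrow> v \<in> S N"
  proof (intro exI[of _ r] conjI allI impI)
    show "0 < r" unfolding r_def using \<delta>(1) \<epsilon>(1) by simp
  next
    fix v assume dv: "dist v v0 < r"
    obtain \<theta> y where ve: "v = (\<theta>, y)" by (cases v)
    have d\<theta>: "\<bar>\<theta> - \<theta>0\<bar> < r" using dist_fst_le[of v v0] dv ve v0e by (simp add: dist_real_def)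
    have dy: "\<bar>y - y0\<bar> < r" using dist_snd_le[of v v0] dv ve v0e by (simp add: dist_real_def)
    have dg: "\<bar>g \<theta> - g \<theta>0\<bar> < \<epsilon> / 2" using \<delta>(2)[of \<theta>] d\<theta> unfolding r_def by (simp add: dist_real_def)
    have "J \<theta> y (g \<theta>)" unfolding J_def
    proof (intro allI impI)
      fix s assume s: "min y (g \<theta>) \<le> s \<and> s \<le> max y (g \<theta>)"
      define s' where "s' = max a0 (min b0 s)"
      have s'K: "(\<theta>0, s') \<in> K0" unfolding K0_def s'_def a0_def b0_def by auto
      have "\<bar>s - s'\<bar> < \<epsilon> / 2" using s dy dg unfolding s'_def a0_def b0_def r_def by (smt (verit))
      moreover have "dist (\<theta>, s) (\<theta>0, s') \<le> dist (\<theta>, s) (\<theta>0, s) + dist (\<theta>0, s) (\<theta>0, s')"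
        by (rule dist_triangle)
      moreover have "dist (\<theta>, s) (\<theta>0, s) = \<bar>\<theta> - \<theta>0\<bar>" by (simp add: dist_Pair_Pair dist_real_def)
      moreover have "dist (\<theta>0, s) (\<theta>0, s') = \<bar>s - s'\<bar>" by (simp add: dist_Pair_Pair dist_real_def)
      ultimately have "dist (\<theta>, s) (\<theta>0, s') < \<epsilon>" using d\<theta> unfolding r_def by linarith
      then have "(\<theta>, s) \<in> ball (\<theta>0, s') \<epsilon>" by (simp add: dist_commute)
      then show "pi2 (\<theta>, s) \<in> U" using ball[OF s'K] by blast
    qed
    then show "v \<in> S N" unfolding S_def ve g_def by simp
  qed
qed

end


context tsetup
begin

lemma S_conn: "connected (S N)"
proof -
  define x0 where "x0 = (0::real, G N 0)"
  define Gr where "Gr = (\<lambda>t. (t, G N t)) ` (UNIV :: real set)"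
  have Grc: "connected Gr" unfolding Gr_def
    by (intro connected_continuous_image connected_UNIV continuous_intros G_cont)
  have GrS: "Gr \<subseteq> S N" unfolding Gr_def using S_graph by auto
  have x0Gr: "x0 \<in> Gr" unfolding x0_def Gr_def by auto
  have "S N \<subseteq> connected_component_set (S N) x0"
  proof
    fix v assume v: "v \<in> S N"
    obtain \<theta> y where ve: "v = (\<theta>, y)" by (cases v)
    have Jv: "J \<theta> y (G N \<theta>)" using v ve by (simp add: S_def)
    define Seg where "Seg = (\<lambda>s. (\<theta>, s)) ` {min y (G N \<theta>)..max y (G N \<theta>)}"
    have Segc: "connected Seg" unfolding Seg_def
      by (intro connected_continuous_image connected_Icc continuous_intros)
    have SegS: "Seg \<subseteq> S N"
    proof
      fix u assume "u \<in> Seg"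
      then obtain s where s: "u = (\<theta>, s)" "min y (G N \<theta>) \<le> s" "s \<le> max y (G N \<theta>)" unfolding Seg_def by auto
      then have "J \<theta> s (G N \<theta>)" using J_sub[OF Jv] by blast
      then show "u \<in> S N" using s by (simp add: S_def)
    qed
    have "(\<theta>, G N \<theta>) \<in> Seg \<inter> Gr" unfolding Seg_def Gr_def by auto
    then have "connected (Seg \<union> Gr)" using Segc Grc by (intro connected_Un) auto
    moreover have "v \<in> Seg" unfolding Seg_def ve by auto
    ultimately show "v \<in> connected_component_set (S N) x0"
      using connected_component_maximal[of x0 "Seg \<union> Gr" "S N"] x0Gr SegS GrS by blast
  qed
  then have "S N = connected_component_set (S N) x0" using connected_component_subset by blast
  then show ?thesis by (metis connected_connected_component)
qed

lemma S_const: assumes "connected K" "K \<subseteq> pi2 -` U" "v \<in> K" "v \<in> S N" shows "K \<subseteq> S N"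
proof -
  define B where "B = (\<Union>N'\<in>{N'. N' \<noteq> N}. S N')"
  have "open B" unfolding B_def using S_open by blast
  have "S N \<inter> B \<inter> K = {}" unfolding B_def using S_disj by blast
  moreover have "K \<subseteq> S N \<union> B"
  proof
    fix u assume "u \<in> K"
    then have "pi2 u \<in> U" using assms(2) by blast
    then obtain N' where "u \<in> S N'" using S_cover[of "fst u" "snd u"] by auto
    then show "u \<in> S N \<union> B" unfolding B_def by (cases "N' = N") auto
  qed
  ultimately show ?thesis using connected_open_sub[OF assms(1) S_open \<open>open B\<close>] assms(3,4) by blast
qed

lemma S_shift: assumes "(\<theta>, y) \<in> S N" shows "(\<theta>, y + of_int c) \<in> S (N + c * (int p * int q))"
proof -
  have J0: "J \<theta> y (G N \<theta>)" using assms by (simp add: S_def)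
  have "J \<theta> (y + of_int c) (G N \<theta> + of_int c)" unfolding J_def
  proof (intro allI impI)
    fix s assume s: "min (y + of_int c) (G N \<theta> + of_int c) \<le> s \<and> s \<le> max (y + of_int c) (G N \<theta> + of_int c)"
    then have "min y (G N \<theta>) \<le> s - of_int c \<and> s - of_int c \<le> max y (G N \<theta>)" by auto
    then have "pi2 (\<theta>, s - of_int c) \<in> U" using J0 unfolding J_def by blast
    moreover have "pi2 (\<theta>, s - of_int c) = pi2 (\<theta>, s)" by (simp add: pi2_eq_iff)
    ultimately show "pi2 (\<theta>, s) \<in> U" by simp
  qed
  then show ?thesis by (simp add: S_def G_per_int)
qed

lemma F_U: "pi2 v \<in> U \<Longrightarrow> pi2 (F v) \<in> U"
  using is_lift_pi2[OF Flift] TU by blast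

lemma F_cont: "continuous_on UNIV F" by (rule is_lift_cont[OF Flift])

lemma F_pair: "F (\<theta>, x) = (\<theta> + \<omega>, snd (F (\<theta>, x)))"
  using Ffst by (metis prod.collapse)

lemma FS_ex: "\<exists>N'. F ` S N \<subseteq> S N'"
proof -
  have c: "connected (F ` S N)"
    by (intro connected_continuous_image S_conn continuous_on_subset[OF F_cont]) auto
  have sub: "F ` S N \<subseteq> pi2 -` U" using S_sub F_U by blast
  have v: "F (0, G N 0) \<in> F ` S N" using S_graph by blast
  obtain N' where "F (0, G N 0) \<in> S N'"
    using S_cover[of "fst (F (0, G N 0))" "snd (F (0, G N 0))"] sub v by auto
  then show ?thesis using S_const[OF c sub v] by blast
qed

definition \<sigma> :: "int \<Rightarrow> int" where "\<sigma> N = (SOME N'. F ` S N \<subseteq> S N')"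

lemma F_\<sigma>: "F ` S N \<subseteq> S (\<sigma> N)"
  unfolding \<sigma>_def using FS_ex by (rule someI_ex)

lemma F_\<sigma>_pt: "v \<in> S N \<Longrightarrow> F v \<in> S (\<sigma> N)"
  using F_\<sigma> by blast

lemma \<sigma>_eq: "v \<in> S N \<Longrightarrow> F v \<in> S N' \<Longrightarrow> \<sigma> N = N'"
  using F_\<sigma>_pt S_disj by blast

lemma G00: "G 0 = h 0 0"
  using G_idx[OF p0 q0, of 0] by (auto simp: fun_eq_iff)

lemma Gl: "G (int l) = h m n"
proof -
  have "int l = int m + int n * int p + 0 * (int p * int q)" using ldef by simp
  then show ?thesis using G_idx[OF mp nq, of 0] by (auto simp: fun_eq_iff)
qed

lemma ix_l: "ix (int l) = m"
proof -
  have "int l = int m + int n * int p + 0 * (int p * int q)" using ldef by simp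
  then show ?thesis using ix_idx[OF mp nq, of 0] by simp
qed

lemma \<sigma>0: "\<sigma> 0 = int l"
proof -
  have P0: "P 0 = U1" unfolding P_def by simp
  have ix0: "ix 0 = 0" unfolding ix_def by simp
  have in0: "(0, h 0 0 0) \<in> pi2 -` U1" using G_P[of 0 0] G00 ix0 P0 by simp
  have "F (0, h 0 0 0) \<in> F ` connected_component_set (pi2 -` U1) (0, h 0 0 0)"
    using in0 by simp
  then have Fin: "F (0, h 0 0 0) \<in> connected_component_set (pi2 -` P m) (0, h m n 0)"
    using Fcomp unfolding P_def by simp
  have inm: "(0, h m n 0) \<in> pi2 -` P m" using G_P[of 0 "int l"] Gl ix_l by simp
  have "connected_component_set (pi2 -` P m) (0, h m n 0) \<subseteq> S (int l)"
  proof (rule S_const)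
    show "connected (connected_component_set (pi2 -` P m) (0, h m n 0))" by simp
    show "connected_component_set (pi2 -` P m) (0, h m n 0) \<subseteq> pi2 -` U"
      using connected_component_subset[of "pi2 -` P m"] mp unfolding U_def by blast
    show "(0, h m n 0) \<in> connected_component_set (pi2 -` P m) (0, h m n 0)" using inm by simp
    show "(0, h m n 0) \<in> S (int l)" using S_graph[of 0 "int l"] Gl by simp
  qed
  then have "F (0, h 0 0 0) \<in> S (int l)" using Fin by blast
  moreover have "(0, h 0 0 0) \<in> S 0" using S_graph[of 0 0] G00 by simp
  ultimately show ?thesis using \<sigma>_eq by blast
qed

lemma \<sigma>_per: "\<sigma> (N + int p * int q) = \<sigma> N + int p * int q"
proof -
  define y where "y = G N 0"
  have v: "(0, y) \<in> S N" unfolding y_def by (rule S_graph)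
  have Fv: "F (0, y) \<in> S (\<sigma> N)" using F_\<sigma>_pt[OF v] .
  have "(0, y + 1) \<in> S (N + int p * int q)" using S_graph[of 0 "N + int p * int q"] G_per unfolding y_def by simp
  moreover have "F (0, y + 1) = (\<omega>, snd (F (0, y)) + 1)"
    using F_pair[of 0 "y + 1"] lift_fibre_int[OF Thom Flift, of 1 0 y] by simp
  moreover have "(\<omega>, snd (F (0, y)) + of_int 1) \<in> S (\<sigma> N + 1 * (int p * int q))"
    using S_shift[of \<omega> "snd (F (0, y))" "\<sigma> N" 1] Fv F_pair[of 0 y] by simp
  ultimately show ?thesis using \<sigma>_eq by fastforce
qed

end


context tsetup
begin

lemma G_ne: "G N t \<noteq> G (N + 1) t"
proof
  assume e: "G N t = G (N + 1) t"
  have "J t (G N t) (G (N + 1) t)" unfolding e by (rule J_refl[OF G_U])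
  then show False using J_G_eq by fastforce
qed

lemma G_step: "G N t < G (N + 1) t"
proof (rule ccontr)
  assume "\<not> G N t < G (N + 1) t"
  then have le: "G (N + 1) t - G N t \<le> 0" by simp
  define f where "f = (\<lambda>x. G (N + 1) x - G N x)"
  have fc: "continuous_on A f" for A unfolding f_def
    by (intro continuous_intros continuous_on_subset[OF G_cont]) auto
  have f0: "0 \<le> f 0" using G0_step[of N] unfolding f_def by simp
  have "\<exists>x. f x = 0"
  proof (cases "0 \<le> t")
    case True
    then show ?thesis using IVT2'[of f t 0 0, OF _ f0 True fc] le unfolding f_def by auto
  next
    case False
    then show ?thesis using IVT'[of f t 0 0, OF _ f0 _ fc] le unfolding f_def by auto
  qed
  then show False using G_ne unfolding f_def by (metis eq_iff_diff_eq_0)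
qed

lemma G_mono: assumes "N < N'" shows "G N t < G N' t"
proof -
  have "G N t < G (N + int d + 1) t" for d :: nat
  proof (induction d)
    case 0 then show ?case using G_step by simp
  next
    case (Suc d)
    then show ?case using G_step[of "N + int d + 1" t] by (simp add: algebra_simps)
  qed
  moreover have "N' = N + int (nat (N' - N - 1)) + 1" using assms by simp
  ultimately show ?thesis by metis
qed

lemma S_order: assumes "(\<theta>, y) \<in> S a" "(\<theta>, y') \<in> S b" "y < y'" shows "a \<le> b"
proof (rule ccontr)
  assume "\<not> a \<le> b"
  then have ba: "b < a" by simp
  define ga where "ga = G a \<theta>"
  define gb where "gb = G b \<theta>"
  have g: "gb < ga" using G_mono[OF ba] unfolding ga_def gb_def by simp
  have Ja: "J \<theta> y ga" using assms(1) unfolding ga_def by (simp add: S_def)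
  have Jb: "J \<theta> y' gb" using assms(2) unfolding gb_def by (simp add: S_def)
  have neq: "\<not> J \<theta> ga gb"
  proof
    assume "J \<theta> ga gb"
    then have "a = b" using J_G_eq unfolding ga_def gb_def by blast
    then show False using ba by simp
  qed
  show False
  proof (cases "min y ga \<le> y' \<and> y' \<le> max y ga")
    case True
    then have "J \<theta> y' ga" using J_sub[OF Ja] by blast
    then show False using neq Jb J_trans J_sym by blast
  next
    case c1: False
    show False
    proof (cases "min y' gb \<le> y \<and> y \<le> max y' gb")
      case True
      then have "J \<theta> y gb" using J_sub[OF Jb] by blast
      then show False using neq Ja J_trans J_sym by blast
    next
      case False
      then have "y < gb" "ga < y'" using c1 assms(3) g by (auto simp: min_def max_def split: if_splits)
      then have "min y' gb \<le> ga \<and> ga \<le> max y' gb" using g by auto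
      then have "J \<theta> ga gb" using J_sub[OF Jb] by blast
      then show False using neq by blast
    qed
  qed
qed

lemma \<sigma>_step: "\<sigma> N < \<sigma> (N + 1)"
proof -
  define y0 where "y0 = G N 0"
  define y1 where "y1 = G (N + 1) 0"
  have y01: "y0 < y1" unfolding y0_def y1_def by (rule G_step)
  define Y0 where "Y0 = snd (F (0, y0))"
  define Y1 where "Y1 = snd (F (0, y1))"
  have Y01: "Y0 < Y1" unfolding Y0_def Y1_def by (rule lift_fibre_mono[OF Thom Flift y01])
  have a: "(\<omega>, Y0) \<in> S (\<sigma> N)" using F_\<sigma>_pt[OF S_graph[of 0 N]] F_pair[of 0 y0] unfolding Y0_def y0_def by simp
  have b: "(\<omega>, Y1) \<in> S (\<sigma> (N + 1))" using F_\<sigma>_pt[OF S_graph[of 0 "N + 1"]] F_pair[of 0 y1] unfolding Y1_def y1_def by simp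
  have le: "\<sigma> N \<le> \<sigma> (N + 1)" by (rule S_order[OF a b Y01])
  have "\<sigma> N \<noteq> \<sigma> (N + 1)"
  proof
    assume e: "\<sigma> N = \<sigma> (N + 1)"
    have "J \<omega> Y0 (G (\<sigma> N) \<omega>)" using a by (simp add: S_def)
    moreover have "J \<omega> Y1 (G (\<sigma> N) \<omega>)" using b e by (simp add: S_def)
    ultimately have JY: "J \<omega> Y0 Y1" using J_trans by blast
    have "J 0 y0 y1" unfolding J_def
    proof (intro allI impI)
      fix s assume s: "min y0 y1 \<le> s \<and> s \<le> max y0 y1"
      then have "Y0 \<le> snd (F (0, s))" "snd (F (0, s)) \<le> Y1"
        using lift_fibre_le[OF Thom Flift, of y0 s 0] lift_fibre_le[OF Thom Flift, of s y1 0] y01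
        unfolding Y0_def Y1_def by auto
      then have "pi2 (\<omega>, snd (F (0, s))) \<in> U" using JY Y01 unfolding J_def by auto
      then have "pi2 (F (0, s)) \<in> U" using F_pair[of 0 s] by simp
      then have "T (pi2 (0, s)) \<in> U" using is_lift_pi2[OF Flift] by simp
      then show "pi2 (0, s) \<in> U" using T_pre_U pi2_torus by blast
    qed
    then have "N = N + 1" using J_G_eq unfolding y0_def y1_def by blast
    then show False by simp
  qed
  then show ?thesis using le by simp
qed

lemma \<sigma>_add: "\<sigma> (N + 1) + int d \<le> \<sigma> (N + 1 + int d)"
proof (induction d)
  case 0 then show ?case by simp
next
  case (Suc d)
  have "\<sigma> (N + 1 + int d) < \<sigma> (N + 1 + int d + 1)" by (rule \<sigma>_step)
  then show ?case using Suc by (simp add: algebra_simps)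
qed

lemma \<sigma>_succ: "\<sigma> (N + 1) = \<sigma> N + 1"
proof -
  define D where "D = p * q"
  have D1: "D \<ge> 1" unfolding D_def using p0 q0 by simp
  have "\<sigma> (N + 1) + int (D - 1) \<le> \<sigma> (N + 1 + int (D - 1))" by (rule \<sigma>_add)
  moreover have "N + 1 + int (D - 1) = N + int p * int q" using D1 unfolding D_def by simp
  moreover have "\<sigma> (N + int p * int q) = \<sigma> N + int p * int q" by (rule \<sigma>_per)
  ultimately have "\<sigma> (N + 1) \<le> \<sigma> N + 1" using D1 unfolding D_def by simp
  then show ?thesis using \<sigma>_step[of N] by simp
qed

lemma \<sigma>_shift: "\<sigma> N = N + int l"
proof (induction N rule: int_induct[where k = 0])
  case base then show ?case using \<sigma>0 by simp
next
  case (step1 i) then show ?case using \<sigma>_succ[of i] by simp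
next
  case (step2 i) then show ?case using \<sigma>_succ[of "i - 1"] by simp
qed

lemma F_S_shift: "v \<in> S N \<Longrightarrow> F v \<in> S (N + int l)"
  using F_\<sigma>_pt \<sigma>_shift by metis

end


context tsetup
begin

lemma Fpow_pair: "(F ^^ N) (\<theta>, x) = (\<theta> + real N * \<omega>, snd ((F ^^ N) (\<theta>, x)))"
proof (induction N)
  case 0 then show ?case by simp
next
  case (Suc N)
  have "(F ^^ Suc N) (\<theta>, x) = F ((F ^^ N) (\<theta>, x))" by simp
  also have "\<dots> = F (\<theta> + real N * \<omega>, snd ((F ^^ N) (\<theta>, x)))" using Suc by metis
  also have "\<dots> = (\<theta> + real N * \<omega> + \<omega>, snd (F (\<theta> + real N * \<omega>, snd ((F ^^ N) (\<theta>, x)))))"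
    by (rule F_pair)
  finally have e: "(F ^^ Suc N) (\<theta>, x) = (\<theta> + real N * \<omega> + \<omega>, snd (F (\<theta> + real N * \<omega>, snd ((F ^^ N) (\<theta>, x)))))" .
  have "\<theta> + real N * \<omega> + \<omega> = \<theta> + real (Suc N) * \<omega>" by (simp add: algebra_simps)
  then show ?case using e by (metis snd_conv)
qed

lemma Fpow_Suc: "snd ((F ^^ Suc N) (\<theta>, x)) = snd (F (\<theta> + real N * \<omega>, snd ((F ^^ N) (\<theta>, x))))"
proof -
  have "(F ^^ Suc N) (\<theta>, x) = F ((F ^^ N) (\<theta>, x))" by simp
  then show ?thesis using Fpow_pair[of N \<theta> x] by metis
qed

lemma Fpow_le: "x \<le> y \<Longrightarrow> snd ((F ^^ N) (\<theta>, x)) \<le> snd ((F ^^ N) (\<theta>, y))"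
proof (induction N)
  case 0 then show ?case by simp
next
  case (Suc N) then show ?case using Fpow_Suc lift_fibre_le[OF Thom Flift] by metis
qed

lemma Fpow_int: "c \<in> \<int> \<Longrightarrow> snd ((F ^^ N) (\<theta>, x + c)) = snd ((F ^^ N) (\<theta>, x)) + c"
proof (induction N)
  case 0 then show ?case by simp
next
  case (Suc N) then show ?case using Fpow_Suc lift_fibre_int[OF Thom Flift] by metis
qed

lemma Fpow_S: "v \<in> S M \<Longrightarrow> (F ^^ N) v \<in> S (M + int N * int l)"
proof (induction N)
  case 0 then show ?case by simp
next
  case (Suc N)
  have "(F ^^ Suc N) v = F ((F ^^ N) v)" by simp
  then have "(F ^^ Suc N) v \<in> S (M + int N * int l + int l)" using F_S_shift[OF Suc.IH[OF Suc.prems]] by simp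
  then show ?case by (simp add: algebra_simps)
qed

lemma h_bound: assumes "i < p" "j < q" shows "\<exists>M. \<forall>t. \<bar>h i j t - of_int k * t / real q\<bar> \<le> M"
proof -
  define \<psi> where "\<psi> = (\<lambda>t. h i j t - of_int k * t / real q)"
  have hl: "qcurve_lift q k (C i) (h i j)" using hlift[OF assms] .
  have \<psi>c: "continuous_on UNIV \<psi>" unfolding \<psi>_def using ql_cont[OF hl] q0 by (intro continuous_intros) auto
  have "compact (\<psi> ` {0..real q})" by (rule compact_continuous_image[OF continuous_on_subset[OF \<psi>c subset_UNIV] compact_Icc])
  then have "bounded (\<psi> ` {0..real q})" by (rule compact_imp_bounded)
  then obtain M where M0: "\<forall>x\<in>\<psi> ` {0..real q}. \<bar>x\<bar> \<le> M" unfolding bounded_real by blast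
  have M: "\<And>t. t \<in> {0..real q} \<Longrightarrow> \<bar>\<psi> t\<bar> \<le> M" using M0 by blast
  have "\<bar>\<psi> t\<bar> \<le> M" for t
  proof -
    define b where "b = \<lfloor>t / real q\<rfloor>"
    define t' where "t' = t - of_int (int q * b)"
    have qpos: "real q > 0" using q0 by simp
    have "of_int b \<le> t / real q" "t / real q < of_int b + 1" unfolding b_def by linarith+
    then have "real q * of_int b \<le> t" "t < real q * of_int b + real q" using qpos by (simp_all add: field_simps)
    then have t'r: "t' \<in> {0..real q}" unfolding t'_def by simp
    have "h i j t = h i j (t' + of_int (int q * b))" unfolding t'_def by simp
    also have "\<dots> = h i j t' + of_int (b * k)" by (rule ql_per_int[OF hl])
    finally have "\<psi> t = \<psi> t'" unfolding \<psi>_def t'_def using qpos by (simp add: field_simps)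
    then show ?thesis using M[OF t'r] by simp
  qed
  then show ?thesis unfolding \<psi>_def by blast
qed

lemma G_bound: "\<exists>B. \<forall>N t. \<bar>G N t - of_int k * t / real q - of_int N / (real p * real q)\<bar> \<le> B"
proof -
  have "\<forall>i j. \<exists>M. i < p \<longrightarrow> j < q \<longrightarrow> (\<forall>t. \<bar>h i j t - of_int k * t / real q\<bar> \<le> M)"
    using h_bound by blast
  then obtain Mf where Mf: "\<And>i j t. i < p \<Longrightarrow> j < q \<Longrightarrow> \<bar>h i j t - of_int k * t / real q\<bar> \<le> Mf i j" by metis
  define B where "B = (\<Sum>i<p. \<Sum>j<q. \<bar>Mf i j\<bar>) + 1"
  have MB: "Mf i j \<le> B - 1" if "i < p" "j < q" for i j
  proof -
    have "Mf i j \<le> \<bar>Mf i j\<bar>" by simp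
    also have "\<dots> \<le> (\<Sum>j<q. \<bar>Mf i j\<bar>)" by (rule member_le_sum) (use that in auto)
    also have "\<dots> \<le> (\<Sum>i<p. \<Sum>j<q. \<bar>Mf i j\<bar>)"
      by (rule member_le_sum[of i "{..<p}" "\<lambda>i. \<Sum>j<q. \<bar>Mf i j\<bar>"]) (use that in \<open>auto intro: sum_nonneg\<close>)
    finally show ?thesis unfolding B_def by simp
  qed
  have "\<bar>G N t - of_int k * t / real q - of_int N / (real p * real q)\<bar> \<le> B" for N t
  proof -
    obtain i j c where ijc: "i < p" "j < q" "N = int i + int j * int p + c * (int p * int q)" by (rule G_decomp)
    have GN: "G N t = h i j t + of_int c" unfolding ijc(3) by (rule G_idx[OF ijc(1,2)])
    have pq: "real p * real q > 0" using p0 q0 by simp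
    have "i + j * p < p * q"
    proof -
      have "i + j * p < p + j * p" using ijc(1) by simp
      also have "\<dots> = p * (j + 1)" by (simp add: algebra_simps)
      also have "\<dots> \<le> p * q" using ijc(2) by (intro mult_le_mono2) auto
      finally show ?thesis .
    qed
    then have "real (i + j * p) < real (p * q)" by (simp only: of_nat_less_iff)
    then have r1: "real i + real j * real p < real p * real q" by simp
    define r where "r = (real i + real j * real p) / (real p * real q)"
    have r01: "0 \<le> r" "r < 1" unfolding r_def using r1 pq by (auto simp: field_simps)
    have pnz: "real p \<noteq> 0" "real q \<noteq> 0" using p0 q0 by auto
    have "of_int N / (real p * real q) = r + of_int c" unfolding r_def ijc(3) using pnz by (simp add: field_simps)
    then have "G N t - of_int k * t / real q - of_int N / (real p * real q) = (h i j t - of_int k * t / real q) - r"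
      using GN by simp
    then show ?thesis using Mf[OF ijc(1,2), of t] MB[OF ijc(1,2)] r01 by linarith
  qed
  then show ?thesis by blast
qed

lemma lin_helper1: "(R::real) = A2 + A3 \<Longrightarrow> A = A1 + A2 \<Longrightarrow> \<bar>Y - Gv\<bar> < 1 \<Longrightarrow> \<bar>Gv - A - A3\<bar> \<le> B \<Longrightarrow> \<bar>Y - R\<bar> \<le> 1 + B + \<bar>A1\<bar>"
  by arith

lemma lin_helper2: "(Y::real) + c \<le> X \<Longrightarrow> X \<le> Y + c + 1 \<Longrightarrow> \<bar>Y - R\<bar> \<le> M \<Longrightarrow> \<bar>X - x - R\<bar> \<le> 1 + M + \<bar>c - x\<bar>"
  by arith

definition \<rho>0 :: real where "\<rho>0 = of_int k / real q * \<omega> + real l / real (p * q)"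

lemma orbit_bound: "\<exists>K. \<forall>N. \<bar>snd ((F ^^ N) (\<theta>, x)) - x - real N * \<rho>0\<bar> \<le> K"
proof -
  obtain B where B: "\<And>N t. \<bar>G N t - of_int k * t / real q - of_int N / (real p * real q)\<bar> \<le> B"
    using G_bound by blast
  define g where "g = G 0 \<theta>"
  define c where "c = \<lfloor>x - g\<rfloor>"
  have cx: "g + of_int c \<le> x" "x \<le> g + of_int c + 1" unfolding c_def by linarith+
  have pq: "real p * real q > 0" using p0 q0 by simp
  have YB: "\<bar>snd ((F ^^ N) (\<theta>, g)) - real N * \<rho>0\<bar> \<le> 1 + B + \<bar>of_int k * \<theta> / real q\<bar>" for N
  proof -
    have "(F ^^ N) (\<theta>, g) \<in> S (0 + int N * int l)" unfolding g_def by (rule Fpow_S[OF S_graph])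
    then have w: "\<bar>snd ((F ^^ N) (\<theta>, g)) - G (int N * int l) (\<theta> + real N * \<omega>)\<bar> < 1"
      using S_width Fpow_pair[of N \<theta> g] by (metis add_0 fst_conv)
    have b: "\<bar>G (int N * int l) (\<theta> + real N * \<omega>) - of_int k * (\<theta> + real N * \<omega>) / real q
              - of_int (int N * int l) / (real p * real q)\<bar> \<le> B" by (rule B)
    have "real N * \<rho>0 = of_int k * (real N * \<omega>) / real q + of_int (int N * int l) / (real p * real q)"
      unfolding \<rho>0_def using p0 q0 by (simp add: field_simps)
    moreover have "of_int k * (\<theta> + real N * \<omega>) / real q = of_int k * \<theta> / real q + of_int k * (real N * \<omega>) / real q"
      by (simp add: distrib_left add_divide_distrib)
    ultimately show ?thesis using w b lin_helper1 by metis
  qed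
  define K where "K = 1 + (1 + B + \<bar>of_int k * \<theta> / real q\<bar>) + \<bar>of_int c - x\<bar>"
  have "\<bar>snd ((F ^^ N) (\<theta>, x)) - x - real N * \<rho>0\<bar> \<le> K" for N
  proof -
    have lo: "snd ((F ^^ N) (\<theta>, g)) + of_int c \<le> snd ((F ^^ N) (\<theta>, x))"
      using Fpow_le[OF cx(1), of N \<theta>] Fpow_int[of "of_int c" N \<theta> g] by simp
    have hi: "snd ((F ^^ N) (\<theta>, x)) \<le> snd ((F ^^ N) (\<theta>, g)) + of_int c + 1"
      using Fpow_le[OF cx(2), of N \<theta>] Fpow_int[of "of_int c + 1" N \<theta> g] by (simp add: add.assoc)
    show ?thesis using lin_helper2[OF lo hi YB[of N]] unfolding K_def by simp
  qed
  then show ?thesis by blast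
qed

lemma rot_limit: "(\<lambda>N. (snd ((F ^^ N) (\<theta>, x)) - x) / real N) \<longlonglongrightarrow> \<rho>0"
proof -
  obtain K where K: "\<And>N. \<bar>snd ((F ^^ N) (\<theta>, x)) - x - real N * \<rho>0\<bar> \<le> K" using orbit_bound by blast
  have "(\<lambda>N. (snd ((F ^^ N) (\<theta>, x)) - x) / real N - \<rho>0) \<longlonglongrightarrow> 0"
  proof (rule Lim_null_comparison)
    show "eventually (\<lambda>N. norm ((snd ((F ^^ N) (\<theta>, x)) - x) / real N - \<rho>0) \<le> K / real N) sequentially"
    proof (rule eventually_sequentiallyI[of 1])
      fix N :: nat assume N: "1 \<le> N"
      then have "(snd ((F ^^ N) (\<theta>, x)) - x) / real N - \<rho>0 = (snd ((F ^^ N) (\<theta>, x)) - x - real N * \<rho>0) / real N"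
        by (simp add: field_simps)
      then show "norm ((snd ((F ^^ N) (\<theta>, x)) - x) / real N - \<rho>0) \<le> K / real N"
        using K[of N] N by (simp add: abs_divide divide_right_mono)
    qed
    show "(\<lambda>N. K / real N) \<longlonglongrightarrow> 0" by (rule lim_const_over_n)
  qed
  then show ?thesis by (simp add: LIM_zero_iff)
qed

end


lemma lift_diff: assumes "is_lift T F" "is_lift T F'"
  shows "\<exists>d1 d2. d1 \<in> \<int> \<and> d2 \<in> \<int> \<and> (\<forall>v. F' v = (fst (F v) + d1, snd (F v) + d2))"
proof -
  have e: "pi2 (F' v) = pi2 (F v)" for v using is_lift_pi2[OF assms(1)] is_lift_pi2[OF assms(2)] by simp
  have i1: "fst (F' v) - fst (F v) \<in> \<int>" and i2: "snd (F' v) - snd (F v) \<in> \<int>" for v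
    using e[of v] pi2_eq_iff[of "fst (F' v)" "snd (F' v)" "fst (F v)" "snd (F v)"] by auto
  have c1: "continuous_on UNIV (\<lambda>v. fst (F' v) - fst (F v))"
    using is_lift_cont[OF assms(1)] is_lift_cont[OF assms(2)] by (intro continuous_intros)
  have c2: "continuous_on UNIV (\<lambda>v. snd (F' v) - snd (F v))"
    using is_lift_cont[OF assms(1)] is_lift_cont[OF assms(2)] by (intro continuous_intros)
  define d1 where "d1 = fst (F' (0,0)) - fst (F (0,0))"
  define d2 where "d2 = snd (F' (0,0)) - snd (F (0,0))"
  have "fst (F' v) - fst (F v) = d1" for v unfolding d1_def by (rule Ints_valued_const_UNIV[OF c1 i1])
  moreover have "snd (F' v) - snd (F v) = d2" for v unfolding d2_def by (rule Ints_valued_const_UNIV[OF c2 i2])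
  ultimately have "F' v = (fst (F v) + d1, snd (F v) + d2)" for v by (simp add: prod_eq_iff algebra_simps)
  moreover have "d1 \<in> \<int>" "d2 \<in> \<int>" unfolding d1_def d2_def using i1 i2 by auto
  ultimately show ?thesis by blast
qed

lemma lift_theta: assumes "is_lift T F"
  shows "\<exists>e. e \<in> \<int> \<and> (\<forall>\<theta> x. snd (F (\<theta> + 1, x)) = snd (F (\<theta>, x)) + e)"
proof -
  have e: "pi2 (F (\<theta> + 1, x)) = pi2 (F (\<theta>, x))" for \<theta> x
    using is_lift_pi2[OF assms, of "(\<theta> + 1, x)"] is_lift_pi2[OF assms, of "(\<theta>, x)"] pi2_shift[of 1 0 \<theta> x] by simp
  define f where "f = (\<lambda>v::real \<times> real. snd (F (fst v + 1, snd v)) - snd (F v))"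
  have i: "f v \<in> \<int>" for v
    using e[of "fst v" "snd v"] pi2_eq_iff[of "fst (F (fst v + 1, snd v))" "snd (F (fst v + 1, snd v))" "fst (F v)" "snd (F v)"]
    unfolding f_def by auto
  have cF: "continuous_on UNIV F" by (rule is_lift_cont[OF assms])
  have "continuous_on UNIV (\<lambda>v::real \<times> real. (fst v + 1, snd v))" by (intro continuous_intros)
  then have "continuous_on UNIV (\<lambda>v::real \<times> real. F (fst v + 1, snd v))"
    using continuous_on_compose2[OF cF] by blast
  then have c: "continuous_on UNIV f" unfolding f_def using cF by (intro continuous_intros)
  have "f v = f (0, 0)" for v by (rule Ints_valued_const_UNIV[OF c i])
  then show ?thesis using i[of "(0,0)"] unfolding f_def by (intro exI[of _ "f (0,0)"]) (auto simp: f_def algebra_simps)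
qed

lemma lift_theta_int: assumes "\<forall>\<theta> x. snd (F (\<theta> + 1, x)) = snd (F (\<theta>, x)) + e"
  shows "snd (F (\<theta> + of_int a, x)) = snd (F (\<theta>, x)) + e * of_int a"
proof (induction a rule: int_induct[where k = 0])
  case base then show ?case by simp
next
  case (step1 i)
  have "snd (F (\<theta> + of_int (i + 1), x)) = snd (F ((\<theta> + of_int i) + 1, x))" by (simp add: algebra_simps)
  also have "\<dots> = snd (F (\<theta> + of_int i, x)) + e" using assms by blast
  finally show ?case using step1 by (simp add: algebra_simps)
next
  case (step2 i)
  have "snd (F (\<theta> + of_int i, x)) = snd (F ((\<theta> + of_int (i - 1)) + 1, x))" by (simp add: algebra_simps)
  also have "\<dots> = snd (F (\<theta> + of_int (i - 1), x)) + e" using assms by blast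
  finally show ?case using step2 by (simp add: algebra_simps)
qed

lemma frac_int_diff: "x - y \<in> \<int> \<Longrightarrow> frac x = frac (y::real)"
  by (metis add.commute diff_add_cancel frac_add_int_right)

context tsetup
begin

lemma other_lift_rate:
  assumes F': "is_lift T F'" and conv: "(\<lambda>N. (snd ((F' ^^ N) (0, 0)) - 0) / real N) \<longlonglongrightarrow> r'"
  shows "r' - \<rho>0 \<in> \<int>"
proof -
  obtain d1 d2 where d: "d1 \<in> \<int>" "d2 \<in> \<int>" "\<And>v. F' v = (fst (F v) + d1, snd (F v) + d2)"
    using lift_diff[OF Flift F'] by blast
  obtain e where e: "e \<in> \<int>" "\<forall>\<theta> x. snd (F (\<theta> + 1, x)) = snd (F (\<theta>, x)) + e" using lift_theta[OF Flift] by blast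
  obtain d1i where d1i: "d1 = of_int d1i" using d(1) by (auto elim: Ints_cases)
  define D where "D = (\<lambda>N::nat. real N * d2 + e * d1 * (real N * (real N - 1) / 2))"
  define \<Phi> where "\<Phi> = (\<lambda>N. snd ((F ^^ N) (0, 0)))"
  define Y where "Y = (\<lambda>N. snd ((F' ^^ N) (0, 0)))"
  have main: "(F' ^^ N) (0, 0) = (real N * (\<omega> + d1), \<Phi> N + D N) \<and> D N \<in> \<int>" for N
  proof (induction N)
    case 0 then show ?case by (simp add: \<Phi>_def D_def)
  next
    case (Suc N)
    have IH: "(F' ^^ N) (0, 0) = (real N * (\<omega> + d1), \<Phi> N + D N)" "D N \<in> \<int>" using Suc by auto
    have "(F' ^^ Suc N) (0, 0) = F' (real N * (\<omega> + d1), \<Phi> N + D N)" using IH by simp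
    also have "\<dots> = (fst (F (real N * (\<omega> + d1), \<Phi> N + D N)) + d1, snd (F (real N * (\<omega> + d1), \<Phi> N + D N)) + d2)"
      by (rule d(3))
    finally have st: "(F' ^^ Suc N) (0, 0) = (fst (F (real N * (\<omega> + d1), \<Phi> N + D N)) + d1, snd (F (real N * (\<omega> + d1), \<Phi> N + D N)) + d2)" .
    have f1: "fst (F (real N * (\<omega> + d1), \<Phi> N + D N)) + d1 = real (Suc N) * (\<omega> + d1)"
      using Ffst by (simp add: algebra_simps)
    have "snd (F (real N * (\<omega> + d1), \<Phi> N + D N)) = snd (F (real N * \<omega> + of_int (int N * d1i), \<Phi> N + D N))"
      using d1i by (simp add: algebra_simps)
    also have "\<dots> = snd (F (real N * \<omega>, \<Phi> N + D N)) + e * of_int (int N * d1i)"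
      by (rule lift_theta_int[OF e(2)])
    also have "snd (F (real N * \<omega>, \<Phi> N + D N)) = snd (F (real N * \<omega>, \<Phi> N)) + D N"
      by (rule lift_fibre_int[OF Thom Flift IH(2)])
    also have "snd (F (real N * \<omega>, \<Phi> N)) = \<Phi> (Suc N)"
      unfolding \<Phi>_def using Fpow_Suc[of N 0 0] by simp
    finally have s1: "snd (F (real N * (\<omega> + d1), \<Phi> N + D N)) = \<Phi> (Suc N) + D N + e * of_int (int N * d1i)" .
    have Drec: "D (Suc N) = D N + e * of_int (int N * d1i) + d2" unfolding D_def using d1i by (simp add: field_simps)
    have "D (Suc N) \<in> \<int>" unfolding Drec using IH(2) e(1) d(2) by (intro Ints_add Ints_mult Ints_of_int) auto
    then show ?case using st f1 s1 Drec by (simp add: algebra_simps)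
  qed
  have YD: "Y N = \<Phi> N + D N" for N using main[of N] unfolding Y_def by simp
  have l1: "(\<lambda>N. Y N / real N) \<longlonglongrightarrow> r'" using conv unfolding Y_def by simp
  have l2: "(\<lambda>N. \<Phi> N / real N) \<longlonglongrightarrow> \<rho>0" using rot_limit[of 0 0] unfolding \<Phi>_def by simp
  have l3: "(\<lambda>N. D N / real N) \<longlonglongrightarrow> r' - \<rho>0"
  proof -
    have "(\<lambda>N. Y N / real N - \<Phi> N / real N) \<longlonglongrightarrow> r' - \<rho>0" by (intro tendsto_diff l1 l2)
    moreover have "Y N / real N - \<Phi> N / real N = D N / real N" for N using YD[of N] by (simp add: add_divide_distrib)
    ultimately show ?thesis by simp
  qed
  have Dn: "D N / real N = d2 + e * d1 * ((real N - 1) / 2)" if "N \<ge> 1" for N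
    unfolding D_def using that by (simp add: field_simps)
  have ed: "e * d1 = 0"
  proof (rule ccontr)
    assume ne: "e * d1 \<noteq> 0"
    have "(\<lambda>N. (D N / real N - d2) / (e * d1)) \<longlonglongrightarrow> (r' - \<rho>0 - d2) / (e * d1)"
      by (intro tendsto_intros l3 ne)
    then have "Bseq (\<lambda>N. (D N / real N - d2) / (e * d1))" by (intro convergent_imp_Bseq convergentI)
    then obtain K where K: "K > 0" "\<And>N. norm ((D N / real N - d2) / (e * d1)) \<le> K" unfolding Bseq_def by blast
    define N where "N = nat \<lceil>2 * K\<rceil> + 3"
    have N1: "N \<ge> 1" unfolding N_def by simp
    have e1: "(D N / real N - d2) / (e * d1) = (real N - 1) / 2" using Dn[OF N1] ne by simp
    have e2: "(real N - 1) / 2 > K"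
    proof -
      have "real (nat \<lceil>2 * K\<rceil>) \<ge> 2 * K" using K(1) by linarith
      then have "real N \<ge> 2 * K + 3" unfolding N_def by simp
      then show ?thesis by simp
    qed
    have gt: "(D N / real N - d2) / (e * d1) > K" unfolding e1 by (rule e2)
    have "norm ((D N / real N - d2) / (e * d1)) \<ge> (D N / real N - d2) / (e * d1)"
      unfolding real_norm_def by (rule abs_ge_self)
    then show False using K(2)[of N] gt by linarith
  qed
  have "D N / real N = d2" if "N \<ge> 1" for N using Dn[OF that] ed by simp
  then have "eventually (\<lambda>N. D N / real N = d2) sequentially" by (rule eventually_sequentiallyI)
  then have "(\<lambda>N. D N / real N) \<longlonglongrightarrow> d2" by (rule tendsto_eventually)
  then have "r' - \<rho>0 = d2" using l3 LIMSEQ_unique by blast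
  then show ?thesis using d(2) by simp
qed

lemma rot_num_val: "rot_num T = frac \<rho>0"
  unfolding rot_num_def
proof (rule the_equality)
  show "\<exists>F'. is_lift T F' \<and> (\<exists>r. frac r = frac \<rho>0 \<and> (\<forall>\<theta> x. (\<lambda>n. (snd ((F' ^^ n) (\<theta>, x)) - x) / real n) \<longlonglongrightarrow> r))"
    using Flift rot_limit by blast
next
  fix \<rho> assume "\<exists>F'. is_lift T F' \<and> (\<exists>r. frac r = \<rho> \<and> (\<forall>\<theta> x. (\<lambda>n. (snd ((F' ^^ n) (\<theta>, x)) - x) / real n) \<longlonglongrightarrow> r))"
  then obtain F' r where F': "is_lift T F'" "frac r = \<rho>" "\<And>\<theta> x. (\<lambda>n. (snd ((F' ^^ n) (\<theta>, x)) - x) / real n) \<longlonglongrightarrow> r"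
    by blast
  have "r - \<rho>0 \<in> \<int>" by (rule other_lift_rate[OF F'(1) F'(3)])
  then show "\<rho> = frac \<rho>0" using F'(2) frac_int_diff by blast
qed

end


lemma no_int_between: "(N::int) < x \<Longrightarrow> x < N + 1 \<Longrightarrow> (x::int) = x \<Longrightarrow> False"
  by simp

lemma ql_coprime: assumes g: "qcurve_lift q k C g" and q: "0 < q" shows "coprime k (int q)"
proof (rule ccontr)
  assume nc: "\<not> coprime k (int q)"
  define d where "d = gcd k (int q)"
  have dpos: "d > 0" unfolding d_def using q by simp
  have d1: "d \<noteq> 1" using nc unfolding d_def by (simp add: coprime_iff_gcd_eq_1)
  then have d2: "d \<ge> 2" using dpos by simp
  have ddq: "d dvd int q" "d dvd k" unfolding d_def by auto
  obtain j' where j': "int q = d * j'" using ddq(1) by (auto elim: dvdE)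
  obtain k' where k': "k = d * k'" using ddq(2) by (auto elim: dvdE)
  have "0 < d * j'" using j' q by simp
  then have j'pos: "j' > 0" using dpos by (simp add: zero_less_mult_iff)
  define j where "j = nat j'"
  define dn where "dn = nat d"
  have jq: "j \<in> {1..<q}"
  proof -
    have "2 * j' \<le> d * j'" using d2 j'pos by (intro mult_right_mono) auto
    then have "j' < int q" using j' j'pos by linarith
    then show ?thesis unfolding j_def using j'pos by auto
  qed
  have "int q = int dn * int j" unfolding dn_def j_def using j' dpos j'pos by simp
  then have qdj: "q = dn * j" by (metis of_nat_eq_iff of_nat_mult)
  define f where "f = (\<lambda>t. g (t + real j) - g t)"
  have fc: "continuous_on A f" for A unfolding f_def using ql_cont[OF g]
    by (intro continuous_intros continuous_on_subset[OF ql_cont[OF g]] continuous_on_compose2[OF ql_cont[OF g]]) auto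
  have fni: "f t \<notin> \<int>" for t unfolding f_def by (rule ql_nonint[OF g jq])
  define N where "N = \<lfloor>f 0\<rfloor>"
  have N0: "of_int N < f 0" "f 0 < of_int N + 1" unfolding N_def using fni[of 0]
    by (metis Ints_of_int floor_less_iff less_le of_int_floor_le) linarith
  have fb: "of_int N < f t \<and> f t < of_int N + 1" for t
  proof (rule ccontr)
    assume "\<not> (of_int N < f t \<and> f t < of_int N + 1)"
    then have "f t \<le> of_int N \<or> of_int N + 1 \<le> f t" by auto
    then obtain y where "y \<in> \<int>" "\<exists>s. f s = y"
    proof
      assume a: "f t \<le> of_int N"
      have "\<exists>s. f s = of_int N"
      proof (cases "0 \<le> t")
        case True then show ?thesis using IVT2'[of f t "of_int N" 0, OF a _ True fc] N0 by auto
      next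
        case False then show ?thesis using IVT'[of f t "of_int N" 0, OF a _ _ fc] N0 by auto
      qed
      then show ?thesis using that[of "of_int N"] by auto
    next
      assume a: "of_int N + 1 \<le> f t"
      have "\<exists>s. f s = of_int N + 1"
      proof (cases "0 \<le> t")
        case True then show ?thesis using IVT'[of f 0 "of_int N + 1" t, OF _ a True fc] N0 by auto
      next
        case False then show ?thesis using IVT2'[of f 0 "of_int N + 1" t, OF _ a _ fc] N0 by auto
      qed
      then show ?thesis using that[of "of_int N + 1"] by auto
    qed
    then show False using fni by blast
  qed
  define a where "a = (\<lambda>r::nat. g (real r * real j))"
  have tel: "(\<Sum>r<dn. f (real r * real j)) = a dn - a 0"
  proof -
    have "(\<Sum>r<dn. f (real r * real j)) = (\<Sum>r<dn. a (Suc r) - a r)"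
      unfolding f_def a_def by (intro sum.cong) (auto simp: algebra_simps)
    then show ?thesis by (simp add: sum_lessThan_telescope)
  qed
  have "a dn - a 0 = of_int k"
  proof -
    have "real dn * real j = 0 + real q" using qdj by simp
    then show ?thesis unfolding a_def using ql_per[OF g, of 0] by simp
  qed
  then have sumk: "(\<Sum>r<dn. f (real r * real j)) = of_int k" using tel by simp
  have dn1: "dn \<ge> 1" unfolding dn_def using d2 by simp
  have lo: "(\<Sum>r<dn. (of_int N :: real)) < (\<Sum>r<dn. f (real r * real j))"
    by (rule sum_strict_mono) (use dn1 fb in \<open>auto simp: lessThan_empty_iff\<close>)
  have hi: "(\<Sum>r<dn. f (real r * real j)) < (\<Sum>r<dn. (of_int N + 1 :: real))"
    by (rule sum_strict_mono) (use dn1 fb in \<open>auto simp: lessThan_empty_iff\<close>)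
  have "real dn = of_int d" unfolding dn_def using dpos by simp
  then have "(of_int d :: real) * of_int N < of_int k" "(of_int k :: real) < of_int d * (of_int N + 1)" using lo hi sumk by auto
  then have "of_int d * of_int N < of_int d * (of_int k' :: real)" "of_int d * of_int k' < of_int d * (of_int N + (1::real))"
    using k' by auto
  then have "of_int N < (of_int k' :: real)" "of_int k' < of_int N + (1::real)" using dpos by auto
  then have "N < k'" "k' < N + 1" by linarith+
  then show False by simp
qed

lemma coprime_frac_eq:
  assumes "coprime k (int q)" "coprime k' (int q')" "0 < q" "0 < q'" "k * int q' = k' * int q"
  shows "q = q' \<and> k = k'"
proof -
  have "int q dvd k * int q'" using assms(5) by simp
  then have "int q dvd int q'" using assms(1) by (simp add: coprime_commute coprime_dvd_mult_right_iff)
  moreover have "int q' dvd k' * int q" using assms(5) by (metis dvd_triv_right)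
  then have "int q' dvd int q" using assms(2) by (simp add: coprime_commute coprime_dvd_mult_right_iff)
  ultimately have "q dvd q'" "q' dvd q" by simp_all
  then have "q = q'" by (rule dvd_antisym)
  moreover then have "k = k'" using assms(5) assms(3) by simp
  ultimately show ?thesis by simp
qed

context tsetup
begin

lemma coprime_kq: "coprime k (int q)"
  by (rule ql_coprime[OF hlift[OF p0 q0] q0])

lemma m_val: "m = (if p = 1 then 0 else 1)"
proof (cases "p = 1")
  case True then show ?thesis using mp by simp
next
  case False
  then have p2: "1 < p" using p0 by simp
  have P0: "P 0 = U1" unfolding P_def by simp
  have ix0: "ix 0 = 0" unfolding ix_def by simp
  have in0: "(0, h 0 0 0) \<in> pi2 -` U1" using G_P[of 0 0] G00 ix0 P0 by simp
  have "F (0, h 0 0 0) \<in> F ` connected_component_set (pi2 -` U1) (0, h 0 0 0)" using in0 by simp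
  then have "F (0, h 0 0 0) \<in> connected_component_set (pi2 -` P m) (0, h m n 0)"
    using Fcomp unfolding P_def by simp
  then have a: "pi2 (F (0, h 0 0 0)) \<in> P m" using connected_component_subset by blast
  have "pi2 (F (0, h 0 0 0)) = T (pi2 (0, h 0 0 0))" by (rule is_lift_pi2[OF Flift])
  then have b: "pi2 (F (0, h 0 0 0)) \<in> P 1" using in0 P_Suc[of 0] P0 by auto
  have "m = 1" using P_ix_unique[OF mp p2 a b] .
  then show ?thesis using False by simp
qed

lemma l_lt: "l < p * q"
proof -
  have "m + n * p < p + n * p" using mp by simp
  also have "\<dots> = p * (n + 1)" by (simp add: algebra_simps)
  also have "\<dots> \<le> p * q" using nq by (intro mult_le_mono2) auto
  finally show ?thesis using ldef by simp
qed

end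


lemma nat_l_unique:
  fixes p p' n n' l l' :: nat
  assumes "0 < p" "0 < p'" "l = (if p = 1 then 0 else 1) + n * p" "l' = (if p' = 1 then 0 else 1) + n' * p'"
    "l * p' = l' * p"
  shows "p = p' \<and> l = l'"
proof (cases "p = 1")
  case True
  show ?thesis
  proof (cases "p' = 1")
    case True then show ?thesis using \<open>p = 1\<close> assms by simp
  next
    case False
    have "n * p' = 1 + n' * p'" using assms(3-5) \<open>p = 1\<close> False by simp
    then have "p' dvd 1 + n' * p'" by (metis dvd_triv_right)
    then have "p' dvd 1" by (metis dvd_add_left_iff dvd_triv_right)
    then show ?thesis using False by simp
  qed
next
  case pn1: False
  show ?thesis
  proof (cases "p' = 1")
    case True
    have "n' * p = 1 + n * p" using assms(3-5) pn1 True by simp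
    then have "p dvd 1 + n * p" by (metis dvd_triv_right)
    then have "p dvd 1" by (metis dvd_add_left_iff dvd_triv_right)
    then show ?thesis using pn1 by simp
  next
    case False
    have e: "(1 + n * p) * p' = (1 + n' * p') * p" using assms(3-5) pn1 False by simp
    have "p dvd (1 + n * p) * p'" unfolding e by simp
    then have "p dvd p' + n * p * p'" by (simp add: algebra_simps)
    moreover have "p dvd n * p * p'" by simp
    ultimately have "p dvd p'" using dvd_add_left_iff[of p "n * p * p'" p'] by blast
    have "p' dvd (1 + n' * p') * p" unfolding e[symmetric] by simp
    then have "p' dvd p + n' * p' * p" by (simp add: algebra_simps)
    moreover have "p' dvd n' * p' * p" by simp
    ultimately have "p' dvd p" using dvd_add_left_iff[of p' "n' * p' * p" p] by blast
    have "p = p'" using \<open>p dvd p'\<close> \<open>p' dvd p\<close> by (rule dvd_antisym)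
    then show ?thesis using assms(5) assms(1) by simp
  qed
qed

lemma real_unique:
  fixes \<omega> :: real
  assumes om: "\<omega> \<notin> \<rat>" and pq: "0 < p" "0 < q" "0 < p'" "0 < q'"
    and cp: "coprime k (int q)" "coprime k' (int q')"
    and ll: "l < p * q" "l' < p' * q'"
    and lf: "l = (if p = 1 then 0 else 1) + n * p" "l' = (if p' = 1 then 0 else 1) + n' * p'"
    and eq: "frac (of_int k / real q * \<omega> + real l / real (p * q)) = frac (of_int k' / real q' * \<omega> + real l' / real (p' * q'))"
  shows "p = p' \<and> q = q' \<and> k = k' \<and> l = l'"
proof -
  obtain z where z: "of_int k / real q * \<omega> + real l / real (p * q) = of_int k' / real q' * \<omega> + real l' / real (p' * q') + of_int z"
    using eq by (rule frac_eqE)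
  have kq: "of_int k / real q = of_int k' / real q'"
  proof (rule ccontr)
    assume ne: "of_int k / real q \<noteq> of_int k' / real q'"
    then have ne': "of_int k / real q - of_int k' / real q' \<noteq> 0" by simp
    have "(of_int k / real q - of_int k' / real q') * \<omega> = real l' / real (p' * q') + of_int z - real l / real (p * q)"
      using z by (simp add: algebra_simps)
    then have "\<omega> = (real l' / real (p' * q') + of_int z - real l / real (p * q)) / (of_int k / real q - of_int k' / real q')"
      using ne' by (simp add: field_simps)
    moreover have "(real l' / real (p' * q') + of_int z - real l / real (p * q)) / (of_int k / real q - of_int k' / real q') \<in> \<rat>"
      by (intro Rats_divide Rats_diff Rats_add Rats_of_nat Rats_of_int)
    ultimately show False using om by simp
  qed
  then have "of_int k * real q' = of_int k' * real q" using pq by (simp add: field_simps)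
  then have "k * int q' = k' * int q" by (metis of_int_eq_iff of_int_mult of_int_of_nat_eq)
  then have qk: "q = q' \<and> k = k'" using coprime_frac_eq[OF cp pq(2) pq(4)] by blast
  then have z2: "real l / real (p * q) = real l' / real (p' * q) + of_int z" using z by simp
  have "real l < real (p * q)" using ll(1) by (simp only: of_nat_less_iff)
  then have r1: "0 \<le> real l / real (p * q)" "real l / real (p * q) < 1" using pq by auto
  have "real l' < real (p' * q)" using ll(2) qk by (simp only: of_nat_less_iff)
  then have r2: "0 \<le> real l' / real (p' * q)" "real l' / real (p' * q) < 1" using pq by auto
  have zz: "(of_int z :: real) = real l / real (p * q) - real l' / real (p' * q)" using z2 by simp
  have "(of_int z :: real) < 1" "(-1 :: real) < of_int z" unfolding zz using r1 r2 by linarith+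
  then have "z < 1" "-1 < z" by simp_all
  then have "z = 0" by simp
  then have "real l / real (p * q) = real l' / real (p' * q)" using z2 by simp
  then have "real l * real p' = real l' * real p" using pq by (simp add: field_simps)
  then have "l * p' = l' * p" by (metis of_nat_eq_iff of_nat_mult)
  then have "p = p' \<and> l = l'" using nat_l_unique[OF pq(1) pq(3) lf] by blast
  then show ?thesis using qk by blast
qed

theorem mainTheorem5:
  fixes \<omega> :: real
  assumes "0 \<le> \<omega>" and "\<omega> < 1" and "\<omega> \<notin> \<rat>"
  shows "(\<forall>T p q k l U1. T_hom \<omega> T \<and> tube_wind_jump \<omega> T p q k l U1 \<longrightarrow>
            rot_num T = frac (of_int k / real q * \<omega> + real l / real (p * q)))
       \<and> (\<forall>T T' p q k l U1 p' q' k' l' U1'.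
            T_hom \<omega> T \<and> T_hom \<omega> T' \<and> rot_num T = rot_num T' \<and>
            tube_wind_jump \<omega> T p q k l U1 \<and> tube_wind_jump \<omega> T' p' q' k' l' U1' \<longrightarrow>
            p = p' \<and> q = q' \<and> k = k' \<and> l = l')"
proof (rule conjI; intro allI impI)
  fix T p q k l U1
  assume a: "T_hom \<omega> T \<and> tube_wind_jump \<omega> T p q k l U1"
  then obtain C h m n F where "tsetup \<omega> T p q k l U1 C h m n F" using tsetup_of_twj by blast
  then interpret tsetup \<omega> T p q k l U1 C h m n F .
  show "rot_num T = frac (of_int k / real q * \<omega> + real l / real (p * q))"
    using rot_num_val unfolding \<rho>0_def .
next
  fix T T' p q k l U1 p' q' k' l' U1'
  assume a: "T_hom \<omega> T \<and> T_hom \<omega> T' \<and> rot_num T = rot_num T' \<and>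
            tube_wind_jump \<omega> T p q k l U1 \<and> tube_wind_jump \<omega> T' p' q' k' l' U1'"
  obtain C h m n F where s1: "tsetup \<omega> T p q k l U1 C h m n F" using tsetup_of_twj a by blast
  obtain C' h' m' n' F' where s2: "tsetup \<omega> T' p' q' k' l' U1' C' h' m' n' F'" using tsetup_of_twj a by blast
  have r1: "rot_num T = frac (of_int k / real q * \<omega> + real l / real (p * q))"
    using tsetup.rot_num_val[OF s1] unfolding tsetup.\<rho>0_def[OF s1] .
  have r2: "rot_num T' = frac (of_int k' / real q' * \<omega> + real l' / real (p' * q'))"
    using tsetup.rot_num_val[OF s2] unfolding tsetup.\<rho>0_def[OF s2] .
  have lf1: "l = (if p = 1 then 0 else 1) + n * p" using tsetup.ldef[OF s1] tsetup.m_val[OF s1] by simp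
  have lf2: "l' = (if p' = 1 then 0 else 1) + n' * p'" using tsetup.ldef[OF s2] tsetup.m_val[OF s2] by simp
  show "p = p' \<and> q = q' \<and> k = k' \<and> l = l'"
  proof (rule real_unique[OF assms(3)])
    show "0 < p" "0 < q" using tsetup.p0[OF s1] tsetup.q0[OF s1] .
    show "0 < p'" "0 < q'" using tsetup.p0[OF s2] tsetup.q0[OF s2] .
    show "coprime k (int q)" by (rule tsetup.coprime_kq[OF s1])
    show "coprime k' (int q')" by (rule tsetup.coprime_kq[OF s2])
    show "l < p * q" by (rule tsetup.l_lt[OF s1])
    show "l' < p' * q'" by (rule tsetup.l_lt[OF s2])
    show "l = (if p = 1 then 0 else 1) + n * p" by (rule lf1)
    show "l' = (if p' = 1 then 0 else 1) + n' * p'" by (rule lf2)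
    show "frac (of_int k / real q * \<omega> + real l / real (p * q)) = frac (of_int k' / real q' * \<omega> + real l' / real (p' * q'))"
      using r1 r2 a by simp
  qed
qed


end
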